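(* Let $(\mathcal X,\rho)$ be a non-empty Polish metric space with Borel $\sigma$-field $\mathfrak B(\mathcal X)$, and let $\mathcal Y\in\mathfrak B(\mathcal X)$ satisfy $$c_{x,0}\,s^{-\gamma}\le \log \mathcal N_{\mathcal X}(s,\mathcal Y,\rho)\le c_{x,1}\,s^{-\gamma}\qquad\text{for all } s\in(0,s_0),$$ for constants $s_0>0$, $0<c_{x,0}<c_{x,1}$, $\gamma>0$. Fix $C>0$, $\beta\in(0,1]$, $\kappa>0$. Let $\mathcal P_{C,\beta,\kappa}$ be the set of pairs $(P_X,P_Y)$ of probability measures on $\mathfrak B(\mathcal X)$ with $P_X(\mathcal Y)=P_Y(\mathcal Y)=1$, $\operatorname{TV}(P_X,P_Y)\ge\kappa$, and such that there is a Borel set $\mathcal Y_0\subseteq\mathcal Y$ with $(P_X+P_Y)(\mathcal Y_0)=2$ and $|p_X(y)-p_X(z)|\le C\rho(y,z)^\beta$ for all $y,z\in\mathcal Y_0$, where $p_X=\mathrm dP_X/\mathrm d(P_X+P_Y)$. Supervised classification model: the training sample $(Z_1,W_1),\dots,(Z_n,W_n)$ is i.i.d., with $W_j\in\{0,1\}$, $P[W_1=1]=w$ for a fixed $w\in(0,1)$, and conditionally on $W_j=0$ (resp. $W_j=1$) $Z_j$ has law $P_X$ (resp. $P_Y$); a further observation $Z$, independent of the training sample, has law $P_X$ or $P_Y$. Define, with $K=1_{[0,1)}$ and $h=\{d\log n\}^{-1/\gamma}$, where $d\in(0,\eta\,c_{x,1}^{-1}4^{-\gamma})$ for some $\eta\in(0,1/2)$,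 $$\hat p_X(z)=\frac{\sum_{j=1}^n(1-W_j)K(\rho(z,Z_j)/h)}{\sum_{j=1}^n(1-W_j)},\qquad \hat p_Y(z)=\frac{\sum_{j=1}^nW_jK(\rho(z,Z_j)/h)}{\sum_{j=1}^nW_j}$$ when $\sum_j(1-W_j)\in(0,n)$, and otherwise $\hat p_X(z)=0$ or $\hat p_Y(z)=0$ respectively by convention (for the group with empty denominator); and let $\varphi=0$ if $\hat p_X(Z)\ge\hat p_Y(Z)$, $\varphi=1$ otherwise. The excess risk is $$\mathcal E_n(\varphi)=\sup_{(P_X,P_Y)\in\mathcal P_{C,\beta,\kappa}}\big(P_{X,Y,X}[\varphi=1]+P_{X,Y,Y}[\varphi=0]-1+\operatorname{TV}(P_X,P_Y)\big),$$ where $P_{X,Y,X}$ and $P_{X,Y,Y}$ denote the probability when $Z$ has law $P_X$, respectively $P_Y$. Then $$\mathcal E_n(\varphi)=\mathcal O\big((\log n)^{-\beta/\gamma}\big)\quad(n\to\infty).$$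
   Context: $\mathcal N_{\mathcal X}(\delta,\mathcal Y,\rho)$ denotes the minimal number of open $\rho$-balls in $\mathcal X$ of radius $\delta$ whose union contains $\mathcal Y$. $\operatorname{TV}(P,Q)=\sup_{A\in\mathfrak B(\mathcal X)}|P(A)-Q(A)|$. *)

theory Defs
  imports "HOL-Probability.Probability"
begin

(* If no finite cover exists the
   value is Inf {} = 0 (never relevant below, since the hypothesis log N >= c s^-gamma > 0
   forces a finite cover). *)
definition covering_number :: "real \<Rightarrow> 'a::metric_space set \<Rightarrow> nat" where
  "covering_number \<delta> Y =
     Inf {card C | C. finite C \<and> Y \<subseteq> (\<Union>c\<in>C. ball c \<delta>)}"

definition TV :: "'a::topological_space measure \<Rightarrow> 'a measure \<Rightarrow> real" where
  "TV P Q = (SUP A\<in>sets borel. \<bar>measure P A - measure Q A\<bar>)"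

definition sum_meas :: "'a measure \<Rightarrow> 'a measure \<Rightarrow> 'a measure" where
  "sum_meas P Q = measure_of (space P) (sets P) (\<lambda>A. emeasure P A + emeasure Q A)"

definition model_class ::
  "'a::polish_space set \<Rightarrow> real \<Rightarrow> real \<Rightarrow> real \<Rightarrow> ('a measure \<times> 'a measure) set" where
  "model_class Y C \<beta> \<kappa> = {(PX, PY).
     prob_space PX \<and> sets PX = sets borel \<and> prob_space PY \<and> sets PY = sets borel \<and>
     emeasure PX Y = 1 \<and> emeasure PY Y = 1 \<and> TV PX PY \<ge> \<kappa> \<and>
     (\<exists>Y0 p. Y0 \<in> sets borel \<and> Y0 \<subseteq> Y \<and>
        emeasure (sum_meas PX PY) Y0 = 2 \<and>
        p \<in> borel_measurable borel \<and> (\<forall>x. 0 \<le> p x) \<and>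
        density (sum_meas PX PY) (\<lambda>x. ennreal (p x)) = PX \<and>
        (\<forall>y\<in>Y0. \<forall>z\<in>Y0. \<bar>p y - p z\<bar> \<le> C * dist y z powr \<beta>))}"

(* law of one training pair (Z_j, W_j): W_j ~ Bernoulli(w), Z_j | W_j=0 ~ PX, Z_j | W_j=1 ~ PY
   (W_j = 1 is encoded as True) *)
definition sample_law :: "real \<Rightarrow> 'a::topological_space measure \<Rightarrow> 'a measure \<Rightarrow> ('a \<times> bool) measure" where
  "sample_law w PX PY =
     measure_pmf (bernoulli_pmf w) \<bind>
       (\<lambda>b. distr (if b then PY else PX) (borel \<Otimes>\<^sub>M count_space UNIV) (\<lambda>z. (z, b)))"

definition K :: "real \<Rightarrow> real" where
  "K t = indicator {0..<1} t"

definition pX_hat :: "nat \<Rightarrow> real \<Rightarrow> (nat \<Rightarrow> 'a::metric_space \<times> bool) \<Rightarrow> 'a \<Rightarrow> real" where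
  "pX_hat n h s z =
     (let m = (\<Sum>j<n. if snd (s j) then 0 else 1::real) in
      if m = 0 then 0
      else (\<Sum>j<n. (if snd (s j) then 0 else 1) * K (dist z (fst (s j)) / h)) / m)"

definition pY_hat :: "nat \<Rightarrow> real \<Rightarrow> (nat \<Rightarrow> 'a::metric_space \<times> bool) \<Rightarrow> 'a \<Rightarrow> real" where
  "pY_hat n h s z =
     (let m = (\<Sum>j<n. if snd (s j) then 1 else 0::real) in
      if m = 0 then 0
      else (\<Sum>j<n. (if snd (s j) then 1 else 0) * K (dist z (fst (s j)) / h)) / m)"

(* classifier phi; True means phi = 1 *)
definition phi :: "nat \<Rightarrow> real \<Rightarrow> (nat \<Rightarrow> 'a::metric_space \<times> bool) \<Rightarrow> 'a \<Rightarrow> bool" where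
  "phi n h s z = (\<not> (pX_hat n h s z \<ge> pY_hat n h s z))"

definition bandwidth :: "real \<Rightarrow> real \<Rightarrow> nat \<Rightarrow> real" where
  "bandwidth d \<gamma> n = (d * ln (real n)) powr (-1 / \<gamma>)"

definition joint_law ::
  "nat \<Rightarrow> real \<Rightarrow> 'a::topological_space measure \<Rightarrow> 'a measure \<Rightarrow> 'a measure
     \<Rightarrow> ((nat \<Rightarrow> 'a \<times> bool) \<times> 'a) measure" where
  "joint_law n w PX PY PZ = (\<Pi>\<^sub>M j\<in>{..<n}. sample_law w PX PY) \<Otimes>\<^sub>M PZ"

definition excess_risk :: "real \<Rightarrow> real \<Rightarrow> real \<Rightarrow> nat \<Rightarrow> 'a::metric_space measure \<Rightarrow> 'a measure \<Rightarrow> real" where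
  "excess_risk w d \<gamma> n PX PY =
     (let h = bandwidth d \<gamma> n in
       measure (joint_law n w PX PY PX) {(s, z) \<in> space (joint_law n w PX PY PX). phi n h s z}
     + measure (joint_law n w PX PY PY) {(s, z) \<in> space (joint_law n w PX PY PY). \<not> phi n h s z}
     - 1 + TV PX PY)"

end

theory Submission
  imports Defs "HOL-Real_Asymp.Real_Asymp"
begin

lemma sum_meas_basic:
  assumes "sets P = sets borel" "sets Q = sets borel"
  shows "sets (sum_meas P Q) = sets borel" "space (sum_meas P Q) = UNIV"
proof -
  have sp: "space P = UNIV" using assms(1) sets_eq_imp_space_eq by fastforce
  show "sets (sum_meas P Q) = sets borel"
    unfolding sum_meas_def using sp assms(1)
    by (metis sets.sets_measure_of_eq)
  show "space (sum_meas P Q) = UNIV" unfolding sum_meas_def using sp assms(1)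
    by (metis sets.space_measure_of_eq)
qed

lemma emeasure_sum_meas:
  assumes "sets P = sets borel" "sets Q = sets borel" "A \<in> sets borel"
  shows "emeasure (sum_meas P Q) A = emeasure P A + emeasure Q A"
proof -
  have sp: "space P = UNIV" using assms(1) sets_eq_imp_space_eq by fastforce
  have ca: "countably_additive (sets P) (\<lambda>A. emeasure P A + emeasure Q A)"
    unfolding countably_additive_def
  proof (intro allI impI)
    fix A :: "nat \<Rightarrow> _" assume A: "range A \<subseteq> sets P" "disjoint_family A" "\<Union> (range A) \<in> sets P"
    have AQ: "range A \<subseteq> sets Q" using A assms by simp
    show "(\<Sum>i. emeasure P (A i) + emeasure Q (A i)) = emeasure P (\<Union> (range A)) + emeasure Q (\<Union> (range A))"
      using A AQ by (subst suminf_add[symmetric]) (auto simp: suminf_emeasure)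
  qed
  show ?thesis unfolding sum_meas_def
    apply (rule emeasure_measure_of_sigma)
    using sets.sigma_algebra_axioms[of P] sp apply simp
    using ca assms(1) apply (auto simp: positive_def assms)
    done
qed

lemma nn_integral_sum_meas:
  assumes P: "sets P = sets borel" and Q: "sets Q = sets borel" and f: "f \<in> borel_measurable borel"
  shows "(\<integral>\<^sup>+x. f x \<partial>sum_meas P Q) = (\<integral>\<^sup>+x. f x \<partial>P) + (\<integral>\<^sup>+x. f x \<partial>Q)"
  using f
proof (induction rule: borel_measurable_induct)
  case (cong f g)
  then show ?case
    by (metis (no_types, lifting) P Q UNIV_I measurable_cong_sets sets_eq_imp_space_eq
        nn_integral_cong space_borel sum_meas_basic(1))
next
  case (set A)
  then show ?case
  proof -
    have "(\<integral>\<^sup>+x. indicator A x \<partial>sum_meas P Q) = emeasure (sum_meas P Q) A"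
      using set sum_meas_basic[OF P Q] by (simp add: nn_integral_indicator)
    also have "\<dots> = emeasure P A + emeasure Q A" using emeasure_sum_meas[OF P Q set] .
    finally show ?thesis using set P Q by (simp add: nn_integral_indicator)
  qed
next
  case (mult u c)
  have m: "u \<in> borel_measurable (sum_meas P Q)" "u \<in> borel_measurable P" "u \<in> borel_measurable Q"
    using mult sum_meas_basic[OF P Q] P Q by (auto cong: measurable_cong_sets)
  show ?case using mult m
    by (simp add: nn_integral_cmult distrib_left)
next
  case (add u v)
  have m: "u \<in> borel_measurable (sum_meas P Q)" "u \<in> borel_measurable P" "u \<in> borel_measurable Q"
    "v \<in> borel_measurable (sum_meas P Q)" "v \<in> borel_measurable P" "v \<in> borel_measurable Q"
    using add sum_meas_basic[OF P Q] P Q by (auto cong: measurable_cong_sets)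
  show ?case using add m
    by (simp add: nn_integral_add add_ac)
next
  case (seq U)
  have m: "\<And>i. U i \<in> borel_measurable (sum_meas P Q)" "\<And>i. U i \<in> borel_measurable P" "\<And>i. U i \<in> borel_measurable Q"
    using seq sum_meas_basic[OF P Q] P Q by (auto cong: measurable_cong_sets)
  have "(\<integral>\<^sup>+x. (SUP i. U i) x \<partial>sum_meas P Q) = (SUP i. \<integral>\<^sup>+x. U i x \<partial>sum_meas P Q)"
    unfolding SUP_apply using m seq by (intro nn_integral_monotone_convergence_SUP) auto
  also have "\<dots> = (SUP i. (\<integral>\<^sup>+x. U i x \<partial>P) + (\<integral>\<^sup>+x. U i x \<partial>Q))" using seq by simp
  also have "\<dots> = (SUP i. (\<integral>\<^sup>+x. U i x \<partial>P)) + (SUP i. (\<integral>\<^sup>+x. U i x \<partial>Q))"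
    apply (rule ennreal_SUP_add)
    using seq by (auto simp: incseq_def le_fun_def intro!: nn_integral_mono)
  also have "\<dots> = (\<integral>\<^sup>+x. (SUP i. U i) x \<partial>P) + (\<integral>\<^sup>+x. (SUP i. U i) x \<partial>Q)"
    unfolding SUP_apply using m seq by (simp add: nn_integral_monotone_convergence_SUP)
  finally show ?case .
qed

definition est :: "bool \<Rightarrow> nat \<Rightarrow> 'a set \<Rightarrow> (nat \<Rightarrow> 'a \<times> bool) \<Rightarrow> real" where
  "est b n A s = (let m = (\<Sum>j<n. if snd (s j) = b then 1 else 0::real) in
      if m = 0 then 0 else (\<Sum>j<n. (if snd (s j) = b then 1 else 0) * indicator A (fst (s j))) / m)"

lemma indep_components:
  assumes L: "prob_space L" and I: "I \<noteq> {}"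
  shows "prob_space.indep_vars (PiM I (\<lambda>_. L)) (\<lambda>_. L) (\<lambda>i \<omega>. \<omega> i) I"
proof -
  interpret P: product_prob_space "\<lambda>_. L" I using L by (simp add: product_prob_space_def product_sigma_finite_def prob_space_imp_sigma_finite product_prob_space_axioms_def)
  have Pp: "prob_space (PiM I (\<lambda>_. L))" using L by (intro prob_space_PiM) auto
  have rv: "\<And>i. i \<in> I \<Longrightarrow> (\<lambda>\<omega>. \<omega> i) \<in> measurable (PiM I (\<lambda>_. L)) L"
    by (rule measurable_component_singleton)
  show ?thesis
  proof (subst prob_space.indep_vars_iff_distr_eq_PiM'[OF Pp I rv])
    have "distr (PiM I (\<lambda>_. L)) (PiM I (\<lambda>_. L)) (\<lambda>x. \<lambda>i\<in>I. x i) = distr (PiM I (\<lambda>_. L)) (PiM I (\<lambda>_. L)) (\<lambda>x. x)"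
      by (rule distr_cong) (auto simp: space_PiM PiE_def extensional_restrict)
    also have "\<dots> = PiM I (\<lambda>_. L)" by (rule distr_id)
    also have "\<dots> = (\<Pi>\<^sub>M i\<in>I. distr (PiM I (\<lambda>_. L)) L (\<lambda>\<omega>. \<omega> i))"
      by (rule PiM_cong) (auto simp: P.PiM_component)
    finally show "distr (PiM I (\<lambda>_. L)) (PiM I (\<lambda>_. L)) (\<lambda>x. \<lambda>i\<in>I. x i) = (\<Pi>\<^sub>M i\<in>I. distr (PiM I (\<lambda>_. L)) L (\<lambda>\<omega>. \<omega> i))" .
  qed
qed

lemma expectation_component:
  assumes L: "prob_space L" and i: "i \<in> I" and f: "f \<in> borel_measurable L"
  shows "integral\<^sup>L (PiM I (\<lambda>_. L)) (\<lambda>\<omega>. f (\<omega> i)) = integral\<^sup>L L (f :: _ \<Rightarrow> real)"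
proof -
  have "integral\<^sup>L L f = integral\<^sup>L (distr (PiM I (\<lambda>_. L)) L (\<lambda>\<omega>. \<omega> i)) f"
    using distr_PiM_component[of I "\<lambda>_. L" i] L i by simp
  also have "\<dots> = integral\<^sup>L (PiM I (\<lambda>_. L)) (\<lambda>\<omega>. f (\<omega> i))"
    using i f by (intro integral_distr) auto
  finally show ?thesis by simp
qed

lemma est_arith:
  fixes m S q t pb nn :: real
  assumes "m > nn*pb/2" "\<bar>S - q*m\<bar> < nn*t*pb/2" "nn > 0" "pb > 0" "t > 0"
  shows "\<bar>S/m - q\<bar> < t"
proof -
  have "nn*pb/2 > 0" using assms by simp
  hence m: "m > 0" using assms(1) by linarith
  have "S/m - q = (S - q*m)/m" using m by (simp add: field_simps)
  hence "\<bar>S/m - q\<bar> = \<bar>S - q*m\<bar>/m" using m by simp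
  also have "\<dots> < (nn*t*pb/2)/m" by (rule divide_strict_right_mono) (use m assms(2) in auto)
  also have "\<dots> \<le> (nn*t*pb/2)/(nn*pb/2)"
    using assms m by (intro divide_left_mono) auto
  also have "\<dots> = t" using assms by (simp add: field_simps)
  finally show ?thesis .
qed

lemma conc:
  fixes L :: "('a::polish_space \<times> bool) measure"
  assumes L: "prob_space L" "sets L = sets (borel \<Otimes>\<^sub>M count_space UNIV)"
    and n: "n > 0" and A: "A \<in> sets borel"
    and pb: "measure L (UNIV \<times> {b}) = pb" "pb > 0"
    and q: "measure L (A \<times> {b}) = pb * q"
    and t: "t > 0"
  shows "measure (PiM {..<n} (\<lambda>_. L)) {s\<in>space (PiM {..<n} (\<lambda>_. L)). t \<le> \<bar>est b n A s - q\<bar>}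
           \<le> 2 * exp (- real n * t\<^sup>2 * pb\<^sup>2 / 8) + exp (- real n * pb\<^sup>2 / 2)"
proof -
  define M where "M = PiM {..<n} (\<lambda>_. L)"
  interpret L: prob_space L by fact
  have Mp: "prob_space M" unfolding M_def using L(1) by (intro prob_space_PiM) auto
  interpret M: prob_space M by fact
  define I where "I = {..<n::nat}"
  have I: "I \<noteq> {}" "finite I" "card I = n" using n by (auto simp: I_def)
  have ind: "M.indep_vars (\<lambda>_. L) (\<lambda>i \<omega>. \<omega> i) I"
    using indep_components[OF L(1) I(1)] by (simp add: M_def I_def)
  define f1 where "f1 = (\<lambda>x::'a\<times>bool. indicator (A \<times> {b}) x - q * indicator (UNIV \<times> {b}) x :: real)"
  define g1 where "g1 = (\<lambda>x::'a\<times>bool. indicator (UNIV \<times> {b}) x :: real)"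
  have AbL: "A \<times> {b} \<in> sets L" "UNIV \<times> {b} \<in> sets L" using L(2) A by auto
  have f1m: "f1 \<in> borel_measurable L" unfolding f1_def using AbL by measurable
  have g1m: "g1 \<in> borel_measurable L" unfolding g1_def using AbL by measurable
  have q01: "0 \<le> q" "q \<le> 1"
  proof -
    have "pb * q \<ge> 0" by (metis q measure_nonneg)
    thus "0 \<le> q" using pb(2) by (simp add: zero_le_mult_iff)
    have "pb * q \<le> pb" using q pb(1) L.finite_measure_mono[of "A \<times> {b}" "UNIV \<times> {b}"] AbL by auto
    thus "q \<le> 1" using pb(2) by simp
  qed
  have Ef1: "L.expectation f1 = 0"
    unfolding f1_def using AbL q pb(1)
    by (subst Bochner_Integration.integral_diff) (auto simp: L.emeasure_eq_measure)
  have Eg1: "L.expectation g1 = pb"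
    unfolding g1_def using AbL pb(1) by (simp add: L.emeasure_eq_measure)
  have compf: "\<And>i. i \<in> I \<Longrightarrow> M.expectation (\<lambda>\<omega>. f1 (\<omega> i)) = 0"
    unfolding M_def I_def using expectation_component[OF L(1) _ f1m, where I="{..<n}"] Ef1 by simp
  have compg: "\<And>i. i \<in> I \<Longrightarrow> M.expectation (\<lambda>\<omega>. g1 (\<omega> i)) = pb"
    unfolding M_def I_def using expectation_component[OF L(1) _ g1m, where I="{..<n}"] Eg1 by simp
  have indf: "M.indep_vars (\<lambda>_. borel) (\<lambda>i \<omega>. f1 (\<omega> i)) I"
    using M.indep_vars_compose2[OF ind, of "\<lambda>_. f1" "\<lambda>_. borel"] f1m by simp
  have indg: "M.indep_vars (\<lambda>_. borel) (\<lambda>i \<omega>. g1 (\<omega> i)) I"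
    using M.indep_vars_compose2[OF ind, of "\<lambda>_. g1" "\<lambda>_. borel"] g1m by simp
  have f1b: "f1 x \<in> {-1..1}" for x using q01 by (auto simp: f1_def indicator_def)
  have g1b: "g1 x \<in> {0..1}" for x by (auto simp: g1_def indicator_def)
  interpret H1: Hoeffding_ineq M I "\<lambda>i \<omega>. f1 (\<omega> i)" "\<lambda>_. -1" "\<lambda>_. 1" "\<Sum>i\<in>I. M.expectation (\<lambda>\<omega>. f1 (\<omega> i))"
    by unfold_locales (use I indf f1b in auto)
  interpret H2: Hoeffding_ineq M I "\<lambda>i \<omega>. g1 (\<omega> i)" "\<lambda>_. 0" "\<lambda>_. 1" "\<Sum>i\<in>I. M.expectation (\<lambda>\<omega>. g1 (\<omega> i))"
    by unfold_locales (use I indg g1b in auto)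
  define e1 where "e1 = real n * t * pb / 2"
  define e2 where "e2 = real n * pb / 2"
  have e1: "e1 \<ge> 0" "e2 \<ge> 0" using n t pb by (auto simp: e1_def e2_def)
  define E1 where "E1 = {x\<in>space M. \<bar>(\<Sum>i\<in>I. f1 (x i)) - (\<Sum>i\<in>I. M.expectation (\<lambda>\<omega>. f1 (\<omega> i)))\<bar> \<ge> e1}"
  define E2 where "E2 = {x\<in>space M. (\<Sum>i\<in>I. g1 (x i)) \<le> (\<Sum>i\<in>I. M.expectation (\<lambda>\<omega>. g1 (\<omega> i))) - e2}"
  have sum4: "(\<Sum>i\<in>I. (1 - (-1::real))\<^sup>2) = 4 * real n" using I by simp
  have sum1: "(\<Sum>i\<in>I. (1 - (0::real))\<^sup>2) = real n" using I by simp
  have PE1: "M.prob E1 \<le> 2 * exp (- real n * t\<^sup>2 * pb\<^sup>2 / 8)"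
  proof -
    have "M.prob E1 \<le> 2 * exp (-2 * e1\<^sup>2 / (\<Sum>i\<in>I. (1 - (-1::real))\<^sup>2))"
      unfolding E1_def by (rule H1.Hoeffding_ineq_abs_ge) (use e1 n I sum4 in auto)
    also have "-2 * e1\<^sup>2 / (\<Sum>i\<in>I. (1 - (-1::real))\<^sup>2) = - real n * t\<^sup>2 * pb\<^sup>2 / 8"
      unfolding sum4 e1_def using n by (simp add: field_simps power2_eq_square)
    finally show ?thesis .
  qed
  have PE2: "M.prob E2 \<le> exp (- real n * pb\<^sup>2 / 2)"
  proof -
    have "M.prob E2 \<le> exp (-2 * e2\<^sup>2 / (\<Sum>i\<in>I. (1 - (0::real))\<^sup>2))"
      unfolding E2_def by (rule H2.Hoeffding_ineq_le) (use e1 n I sum1 in auto)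
    also have "-2 * e2\<^sup>2 / (\<Sum>i\<in>I. (1 - (0::real))\<^sup>2) = - real n * pb\<^sup>2 / 2"
      unfolding sum1 e2_def using n by (simp add: field_simps power2_eq_square)
    finally show ?thesis .
  qed
  have sub: "{s\<in>space M. t \<le> \<bar>est b n A s - q\<bar>} \<subseteq> E1 \<union> E2"
  proof
    fix s assume s: "s \<in> {s\<in>space M. t \<le> \<bar>est b n A s - q\<bar>}"
    show "s \<in> E1 \<union> E2"
    proof (rule ccontr)
      assume "s \<notin> E1 \<union> E2"
      hence c1: "\<bar>(\<Sum>i\<in>I. f1 (s i))\<bar> < e1" and c2: "(\<Sum>i\<in>I. g1 (s i)) > real n * pb - e2"
        using s compf compg I by (auto simp: E1_def E2_def)
      define m where "m = (\<Sum>j<n. if snd (s j) = b then 1 else 0::real)"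
      define S where "S = (\<Sum>j<n. (if snd (s j) = b then 1 else 0) * indicator A (fst (s j)) :: real)"
      have gm: "(\<Sum>i\<in>I. g1 (s i)) = m" unfolding m_def g1_def I_def
        by (intro sum.cong) (auto simp: indicator_def mem_Times_iff)
      have fpt: "f1 x = (if snd x = b then 1 else 0) * indicator A (fst x) - q * (if snd x = b then 1 else 0)" for x
        by (cases x) (simp add: f1_def indicator_def mem_Times_iff)
      have fS: "(\<Sum>i\<in>I. f1 (s i)) = S - q * m" unfolding m_def S_def I_def fpt
        by (simp add: sum_subtractf sum_distrib_left)
      have mpos: "m > real n * pb / 2" using c2 gm by (simp add: e2_def mult.commute)
      have lt: "\<bar>S/m - q\<bar> < t"
        by (rule est_arith[where nn="real n" and pb=pb]) (use mpos c1 fS n pb t in \<open>auto simp: e1_def\<close>)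
      have "real n * pb / 2 > 0" using n pb by simp
      hence "m \<noteq> 0" using mpos by linarith
      with lt have "\<bar>est b n A s - q\<bar> < t" unfolding est_def Let_def m_def S_def by simp
      thus False using s by simp
    qed
  qed
  have E12: "E1 \<in> sets M" "E2 \<in> sets M" unfolding E1_def E2_def by measurable
  have "M.prob {s\<in>space M. t \<le> \<bar>est b n A s - q\<bar>} \<le> M.prob (E1 \<union> E2)"
  proof (cases "{s\<in>space M. t \<le> \<bar>est b n A s - q\<bar>} \<in> sets M")
    case True
    then show ?thesis using sub E12 by (intro M.finite_measure_mono) auto
  next
    case False
    then show ?thesis by (simp add: measure_notin_sets)
  qed
  also have "\<dots> \<le> M.prob E1 + M.prob E2" using E12 by (rule measure_Un_le)
  finally show ?thesis unfolding M_def using PE1 PE2 by (simp add: M_def)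
qed

lemma K_ball: "h > 0 \<Longrightarrow> K (dist z y / h) = indicator (ball z h) y"
  by (auto simp: K_def indicator_def mem_ball divide_less_eq)

lemma pX_hat_est:
  assumes "h > 0" shows "pX_hat n h s z = est False n (ball z h) s"
proof -
  have e: "\<And>x::bool. (if x = False then 1 else 0::real) = (if x then 0 else 1)" by simp
  show ?thesis unfolding pX_hat_def est_def e K_ball[OF assms] by simp
qed

lemma ps_emeasure: "prob_space M \<Longrightarrow> emeasure M A = ennreal (measure M A)"
  by (metis finite_measure.emeasure_eq_measure prob_space_def)

lemma pY_hat_est: "h > 0 \<Longrightarrow> pY_hat n h s z = est True n (ball z h) s"
  unfolding pY_hat_def est_def by (simp add: K_ball cong: if_cong)

context
  fixes PX PY :: "'a::polish_space measure" and w :: real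
  assumes PX: "prob_space PX" "sets PX = sets borel"
    and PY: "prob_space PY" "sets PY = sets borel"
    and w: "0 < w" "w < 1"
begin

definition "Bf = (\<lambda>b. distr (if b then PY else PX) (borel \<Otimes>\<^sub>M count_space UNIV) (\<lambda>z. (z, b)))"

lemma Bf_space: "Bf b \<in> space (prob_algebra (borel \<Otimes>\<^sub>M count_space UNIV))"
proof -
  have ps: "prob_space (if b then PY else PX)" using PX PY by auto
  have se: "sets (if b then PY else PX) = sets borel" using PX PY by auto
  have m: "(\<lambda>z. (z, b)) \<in> measurable (if b then PY else PX) (borel \<Otimes>\<^sub>M count_space UNIV)"
    using se by (simp cong: measurable_cong_sets)
  show ?thesis unfolding Bf_def space_prob_algebra
    using prob_space.prob_space_distr[OF ps m] by simp
qed

lemma Bf_meas: "Bf \<in> measurable (measure_pmf (bernoulli_pmf w)) (prob_algebra (borel \<Otimes>\<^sub>M count_space UNIV))"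
  using Bf_space by simp

lemma sample_law_eq: "sample_law w PX PY = measure_pmf (bernoulli_pmf w) \<bind> Bf"
  unfolding sample_law_def Bf_def ..

lemma sample_law_prob: "prob_space (sample_law w PX PY)"
  unfolding sample_law_eq
  by (rule prob_space_bind'[OF _ Bf_meas]) (simp add: space_prob_algebra prob_space_measure_pmf)

lemma sample_law_sets: "sets (sample_law w PX PY) = sets (borel \<Otimes>\<^sub>M count_space UNIV)"
  unfolding sample_law_eq
  by (rule sets_bind'[OF _ Bf_meas]) (simp add: space_prob_algebra prob_space_measure_pmf)

lemma sample_law_measure:
  assumes X: "X \<in> sets (borel \<Otimes>\<^sub>M count_space UNIV)"
  shows "measure (sample_law w PX PY) X = w * measure (Bf True) X + (1 - w) * measure (Bf False) X"
proof -
  have ps: "prob_space (Bf b)" for b using Bf_space[of b] by (simp add: space_prob_algebra)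
  have "emeasure (sample_law w PX PY) X = (\<integral>\<^sup>+b. emeasure (Bf b) X \<partial>measure_pmf (bernoulli_pmf w))"
    unfolding sample_law_eq
    by (rule emeasure_bind_prob_algebra[OF _ Bf_meas X]) (simp add: space_prob_algebra prob_space_measure_pmf)
  also have "\<dots> = (\<integral>\<^sup>+b. ennreal (measure (Bf b) X) \<partial>measure_pmf (bernoulli_pmf w))"
    using ps by (simp add: ps_emeasure)
  also have "\<dots> = ennreal (measure (Bf True) X) * w + ennreal (measure (Bf False) X) * (1 - w)"
    using w by (subst nn_integral_bernoulli_pmf) auto
  also have "\<dots> = ennreal (w * measure (Bf True) X + (1 - w) * measure (Bf False) X)"
    using w by (subst ennreal_plus) (auto simp: ennreal_mult mult.commute)
  finally have "ennreal (measure (sample_law w PX PY) X) = ennreal (w * measure (Bf True) X + (1 - w) * measure (Bf False) X)"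
    using sample_law_prob by (simp add: ps_emeasure)
  moreover have "0 \<le> w * measure (Bf True) X + (1 - w) * measure (Bf False) X"
    using w by (intro add_nonneg_nonneg mult_nonneg_nonneg) auto
  ultimately show ?thesis by (subst (asm) ennreal_inj) auto
qed

lemma sample_law_False:
  assumes A: "A \<in> sets borel"
  shows "measure (sample_law w PX PY) (A \<times> {False}) = (1 - w) * measure PX A"
proof -
  have "measure (Bf True) (A \<times> {False}) = 0"
    unfolding Bf_def using A PY by (subst measure_distr) (auto simp: vimage_def)
  moreover have "measure (Bf False) (A \<times> {False}) = measure PX A"
    unfolding Bf_def using A PX by (subst measure_distr) (auto simp: vimage_def)
  ultimately show ?thesis using A by (subst sample_law_measure) auto
qed

lemma sample_law_True:
  assumes A: "A \<in> sets borel"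
  shows "measure (sample_law w PX PY) (A \<times> {True}) = w * measure PY A"
proof -
  have "measure (Bf False) (A \<times> {True}) = 0"
    unfolding Bf_def using A PX by (subst measure_distr) (auto simp: vimage_def)
  moreover have "measure (Bf True) (A \<times> {True}) = measure PY A"
    unfolding Bf_def using A PY by (subst measure_distr) (auto simp: vimage_def)
  ultimately show ?thesis using A by (subst sample_law_measure) auto
qed

end

lemma comp_meas:
  fixes L :: "('a::second_countable_topology \<times> bool) measure"
  assumes L: "sets L = sets (borel \<Otimes>\<^sub>M count_space UNIV)" and j: "j \<in> I"
  shows "(\<lambda>s. snd (s j)) \<in> measurable (PiM I (\<lambda>_. L)) (count_space UNIV)"
    "(\<lambda>s. fst (s j)) \<in> measurable (PiM I (\<lambda>_. L)) (borel :: 'a measure)"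
proof -
  have "(\<lambda>s. s j) \<in> measurable (PiM I (\<lambda>_. L)) (borel \<Otimes>\<^sub>M count_space (UNIV::bool set))"
    using j L by (simp cong: measurable_cong_sets)
  thus "(\<lambda>s. snd (s j)) \<in> measurable (PiM I (\<lambda>_. L)) (count_space UNIV)"
    "(\<lambda>s. fst (s j)) \<in> measurable (PiM I (\<lambda>_. L)) (borel :: 'a measure)"
    by (auto intro: measurable_compose[OF _ measurable_snd] measurable_compose[OF _ measurable_fst])
qed

lemma est_measurable:
  assumes L: "sets L = sets (borel \<Otimes>\<^sub>M count_space UNIV)" and A: "A \<in> sets borel"
  shows "(\<lambda>s. est b n (A::'a::second_countable_topology set) s) \<in> borel_measurable (PiM {..<n} (\<lambda>_. L))"
proof -
  note [measurable] = comp_meas[OF L]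
  show ?thesis unfolding est_def Let_def using A by measurable
qed

lemma K_meas[measurable]: "K \<in> borel_measurable borel"
  unfolding K_def[abs_def] by measurable

lemma phi_measurable:
  fixes L :: "('a::polish_space \<times> bool) measure"
  assumes L: "sets L = sets (borel \<Otimes>\<^sub>M count_space UNIV)" and PZ: "sets PZ = sets (borel :: 'a measure)"
  shows "{x \<in> space (PiM {..<n} (\<lambda>_. L) \<Otimes>\<^sub>M PZ). phi n h (fst x) (snd x)} \<in> sets (PiM {..<n} (\<lambda>_. L) \<Otimes>\<^sub>M PZ)"
proof -
  define S where "S = PiM {..<n} (\<lambda>_. L)"
  have c1: "(\<lambda>x. snd (fst x j)) \<in> measurable (S \<Otimes>\<^sub>M PZ) (count_space UNIV)" if "j < n" for j
    using measurable_compose[OF measurable_fst comp_meas(1)[OF L, of j "{..<n}"]] that by (simp add: S_def)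
  have c2: "(\<lambda>x. fst (fst x j)) \<in> borel_measurable (S \<Otimes>\<^sub>M PZ)" if "j < n" for j
    using measurable_compose[OF measurable_fst comp_meas(2)[OF L, of j "{..<n}"]] that by (simp add: S_def)
  have c3: "snd \<in> borel_measurable (S \<Otimes>\<^sub>M PZ)"
    using PZ by (simp cong: measurable_cong_sets)
  have c4: "(\<lambda>x. K (dist (snd x) (fst (fst x j)) / h)) \<in> borel_measurable (S \<Otimes>\<^sub>M PZ)" if "j < n" for j
    by (rule measurable_compose[OF _ K_meas]) (intro borel_measurable_divide borel_measurable_dist c3 c2 that measurable_const; simp)
  have c5: "(\<lambda>x. if snd (fst x j) then a else (b::real)) \<in> borel_measurable (S \<Otimes>\<^sub>M PZ)" if "j < n" for j a b
  proof -
    have "Measurable.pred (S \<Otimes>\<^sub>M PZ) (\<lambda>x. snd (fst x j))" using c1[OF that] by simp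
    thus ?thesis by measurable
  qed
  have pX: "(\<lambda>x. pX_hat n h (fst x) (snd x)) \<in> borel_measurable (S \<Otimes>\<^sub>M PZ)"
    unfolding pX_hat_def Let_def using c4 c5 by measurable
  have pY: "(\<lambda>x. pY_hat n h (fst x) (snd x)) \<in> borel_measurable (S \<Otimes>\<^sub>M PZ)"
    unfolding pY_hat_def Let_def using c4 c5 by measurable
  have "Measurable.pred (S \<Otimes>\<^sub>M PZ) (\<lambda>x. phi n h (fst x) (snd x))"
    unfolding phi_def using pX pY by measurable
  thus ?thesis unfolding S_def by (simp add: pred_def)
qed

lemma bound_mono:
  fixes v pb t nn :: real
  assumes "0 < v" "v \<le> pb" "nn \<ge> 0"
  shows "2 * exp (- nn * t\<^sup>2 * pb\<^sup>2 / 8) + exp (- nn * pb\<^sup>2 / 2) \<le> 2 * exp (- nn * t\<^sup>2 * v\<^sup>2 / 8) + exp (- nn * v\<^sup>2 / 2)"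
proof -
  have v2: "v\<^sup>2 \<le> pb\<^sup>2" using assms by (intro power_mono) auto
  have "nn * t\<^sup>2 * v\<^sup>2 \<le> nn * t\<^sup>2 * pb\<^sup>2" using v2 assms by (intro mult_left_mono) auto
  moreover have "nn * v\<^sup>2 \<le> nn * pb\<^sup>2" using v2 assms by (intro mult_left_mono) auto
  ultimately show ?thesis by (intro add_mono) auto
qed

lemma measure_UNIV_prob:
  assumes "prob_space P" "sets P = sets (borel::'a::topological_space measure)"
  shows "measure P UNIV = 1"
proof -
  have "space P = UNIV" using assms(2) sets_eq_imp_space_eq by fastforce
  thus ?thesis using prob_space.prob_space[OF assms(1)] by simp
qed

context
  fixes PX PY :: "'a::polish_space measure" and w :: real
  assumes PX: "prob_space PX" "sets PX = sets borel"
    and PY: "prob_space PY" "sets PY = sets borel"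
    and w: "0 < w" "w < 1"
begin

abbreviation "SL n \<equiv> PiM {..<n} (\<lambda>_. sample_law w PX PY)"

lemma conc_XY:
  assumes n: "n > 0" and A: "A \<in> sets borel" and t: "t > 0"
  shows "measure (SL n) {s\<in>space (SL n). t \<le> \<bar>est False n A s - measure PX A\<bar>}
           \<le> 2 * exp (- real n * t\<^sup>2 * (min w (1-w))\<^sup>2 / 8) + exp (- real n * (min w (1-w))\<^sup>2 / 2)"
    and "measure (SL n) {s\<in>space (SL n). t \<le> \<bar>est True n A s - measure PY A\<bar>}
           \<le> 2 * exp (- real n * t\<^sup>2 * (min w (1-w))\<^sup>2 / 8) + exp (- real n * (min w (1-w))\<^sup>2 / 2)"
proof -
  have Lp: "prob_space (sample_law w PX PY)" using sample_law_prob[OF PX PY w] .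
  have Ls: "sets (sample_law w PX PY) = sets (borel \<Otimes>\<^sub>M count_space UNIV)" using sample_law_sets[OF PX PY w] .
  have v: "0 < min w (1-w)" "min w (1-w) \<le> w" "min w (1-w) \<le> 1 - w" using w by auto
  show "measure (SL n) {s\<in>space (SL n). t \<le> \<bar>est False n A s - measure PX A\<bar>}
           \<le> 2 * exp (- real n * t\<^sup>2 * (min w (1-w))\<^sup>2 / 8) + exp (- real n * (min w (1-w))\<^sup>2 / 2)"
    apply (rule order_trans[OF conc[OF Lp Ls n A, where b=False and pb="1-w" and q="measure PX A", OF _ _ _ t]])
    using sample_law_False[OF PX PY w A] sample_law_False[OF PX PY w, of UNIV]
      measure_UNIV_prob[OF PX] w
    apply auto[3]
    by (rule bound_mono) (use v in auto)
  show "measure (SL n) {s\<in>space (SL n). t \<le> \<bar>est True n A s - measure PY A\<bar>}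
           \<le> 2 * exp (- real n * t\<^sup>2 * (min w (1-w))\<^sup>2 / 8) + exp (- real n * (min w (1-w))\<^sup>2 / 2)"
    apply (rule order_trans[OF conc[OF Lp Ls n A, where b=True and pb="w" and q="measure PY A", OF _ _ _ t]])
    using sample_law_True[OF PX PY w A] sample_law_True[OF PX PY w, of UNIV]
      measure_UNIV_prob[OF PY] w
    apply auto[3]
    by (rule bound_mono) (use v in auto)
qed

definition "epsn n t = 2 * (2 * exp (- real n * t\<^sup>2 * (min w (1-w))\<^sup>2 / 8) + exp (- real n * (min w (1-w))\<^sup>2 / 2))"

lemma wrong_prob:
  assumes n: "n > 0" and h: "h > 0" and Mp: "Mg > 0"
  shows "measure PX (ball z h) - measure PY (ball z h) \<ge> Mg \<Longrightarrow>
           measure (SL n) {s\<in>space (SL n). phi n h s z} \<le> epsn n (Mg/2)"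
    and "measure PY (ball z h) - measure PX (ball z h) \<ge> Mg \<Longrightarrow>
           measure (SL n) {s\<in>space (SL n). \<not> phi n h s z} \<le> epsn n (Mg/2)"
proof -
  have Lp: "prob_space (sample_law w PX PY)" using sample_law_prob[OF PX PY w] .
  have Ls: "sets (sample_law w PX PY) = sets (borel \<Otimes>\<^sub>M count_space UNIV)" using sample_law_sets[OF PX PY w] .
  interpret S: prob_space "SL n" using Lp by (intro prob_space_PiM) auto
  define B where "B = ball z h"
  have B: "B \<in> sets borel" by (simp add: B_def)
  define FX where "FX = {s\<in>space (SL n). Mg/2 \<le> \<bar>est False n B s - measure PX B\<bar>}"
  define FY where "FY = {s\<in>space (SL n). Mg/2 \<le> \<bar>est True n B s - measure PY B\<bar>}"
  have E: "FX \<in> sets (SL n)" "FY \<in> sets (SL n)"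
    unfolding FX_def FY_def using est_measurable[OF Ls B] by measurable
  have PE: "measure (SL n) (FX \<union> FY) \<le> epsn n (Mg/2)"
  proof -
    have "measure (SL n) (FX \<union> FY) \<le> measure (SL n) FX + measure (SL n) FY"
      using E by (rule measure_Un_le)
    also have "\<dots> \<le> epsn n (Mg/2)"
      unfolding FX_def FY_def epsn_def using conc_XY[OF n B, of "Mg/2"] Mp by simp
    finally show ?thesis .
  qed
  have outside: "\<bar>pX_hat n h s z - measure PX B\<bar> < Mg/2 \<and> \<bar>pY_hat n h s z - measure PY B\<bar> < Mg/2"
    if "s \<in> space (SL n)" "s \<notin> FX \<union> FY" for s
    using that unfolding FX_def FY_def pX_hat_est[OF h] pY_hat_est[OF h] B_def by auto
  show "measure PX (ball z h) - measure PY (ball z h) \<ge> Mg \<Longrightarrow>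
           measure (SL n) {s\<in>space (SL n). phi n h s z} \<le> epsn n (Mg/2)"
  proof -
    assume d: "measure PX (ball z h) - measure PY (ball z h) \<ge> Mg"
    have "{s\<in>space (SL n). phi n h s z} \<subseteq> FX \<union> FY"
    proof
      fix s assume s: "s \<in> {s\<in>space (SL n). phi n h s z}"
      show "s \<in> FX \<union> FY"
      proof (rule ccontr)
        assume "s \<notin> FX \<union> FY"
        with outside[of s] s have o: "\<bar>pX_hat n h s z - measure PX (ball z h)\<bar> < Mg/2" "\<bar>pY_hat n h s z - measure PY (ball z h)\<bar> < Mg/2"
          unfolding B_def by auto
        have "pX_hat n h s z \<ge> pY_hat n h s z" using o d unfolding abs_less_iff by linarith
        with s show False by (simp add: phi_def)
      qed
    qed
    hence "measure (SL n) {s\<in>space (SL n). phi n h s z} \<le> measure (SL n) (FX \<union> FY)"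
      using E by (intro S.finite_measure_mono) auto
    with PE show ?thesis by linarith
  qed
  show "measure PY (ball z h) - measure PX (ball z h) \<ge> Mg \<Longrightarrow>
           measure (SL n) {s\<in>space (SL n). \<not> phi n h s z} \<le> epsn n (Mg/2)"
  proof -
    assume d: "measure PY (ball z h) - measure PX (ball z h) \<ge> Mg"
    have "{s\<in>space (SL n). \<not> phi n h s z} \<subseteq> FX \<union> FY"
    proof
      fix s assume s: "s \<in> {s\<in>space (SL n). \<not> phi n h s z}"
      show "s \<in> FX \<union> FY"
      proof (rule ccontr)
        assume "s \<notin> FX \<union> FY"
        with outside[of s] s have o: "\<bar>pX_hat n h s z - measure PX (ball z h)\<bar> < Mg/2" "\<bar>pY_hat n h s z - measure PY (ball z h)\<bar> < Mg/2"
          unfolding B_def by auto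
        have "pX_hat n h s z < pY_hat n h s z" using o d unfolding abs_less_iff by linarith
        with s show False by (simp add: phi_def)
      qed
    qed
    hence "measure (SL n) {s\<in>space (SL n). \<not> phi n h s z} \<le> measure (SL n) (FX \<union> FY)"
      using E by (intro S.finite_measure_mono) auto
    with PE show ?thesis by linarith
  qed
qed

end

locale dens_setup =
  fixes PX PY :: "'a::polish_space measure" and p :: "'a \<Rightarrow> real" and Y0 :: "'a set"
  assumes PX: "prob_space PX" "sets PX = sets borel"
    and PY: "prob_space PY" "sets PY = sets borel"
    and p_meas: "p \<in> borel_measurable borel" and p_nn: "\<And>x. 0 \<le> p x"
    and dens: "density (sum_meas PX PY) (\<lambda>x. ennreal (p x)) = PX"
    and Y0: "Y0 \<in> sets borel" "emeasure (sum_meas PX PY) Y0 = 2"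
begin

abbreviation "\<mu> \<equiv> sum_meas PX PY"

lemma mu_sets[simp]: "sets \<mu> = sets borel" and mu_space[simp]: "space \<mu> = UNIV"
  using sum_meas_basic[OF PX(2) PY(2)] by auto

lemma PX_space[simp]: "space PX = UNIV" using sets_eq_imp_space_eq[OF PX(2)] by simp
lemma PY_space[simp]: "space PY = UNIV" using sets_eq_imp_space_eq[OF PY(2)] by simp

lemma p_meas_mu[measurable]: "p \<in> borel_measurable \<mu>"
  using p_meas by (simp cong: measurable_cong_sets)

lemma emeasure_mu: "A \<in> sets borel \<Longrightarrow> emeasure \<mu> A = emeasure PX A + emeasure PY A"
  using emeasure_sum_meas[OF PX(2) PY(2)] .

lemma mu_finite: "finite_measure \<mu>"
proof
  have "emeasure \<mu> UNIV = emeasure PX UNIV + emeasure PY UNIV" by (simp add: emeasure_mu)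
  also have "\<dots> = 2" using prob_space.emeasure_space_1[OF PX(1)] prob_space.emeasure_space_1[OF PY(1)]
    by simp
  finally show "emeasure \<mu> (space \<mu>) \<noteq> \<infinity>" by simp
qed

interpretation mu: finite_measure \<mu> by (rule mu_finite)

lemma measure_mu: "A \<in> sets borel \<Longrightarrow> measure \<mu> A = measure PX A + measure PY A"
  using emeasure_mu[of A] PX(1) PY(1)
  by (simp add: mu.emeasure_eq_measure ps_emeasure ennreal_plus[symmetric] del: ennreal_plus)

lemma measure_mu_UNIV: "measure \<mu> UNIV = 2"
  using measure_mu[of UNIV] measure_UNIV_prob[OF PX] measure_UNIV_prob[OF PY] by simp

lemma AE_Y0: "AE x in \<mu>. x \<in> Y0"
proof -
  have "emeasure \<mu> (UNIV - Y0) = emeasure \<mu> UNIV - emeasure \<mu> Y0"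
    using Y0 by (intro emeasure_Diff) auto
  also have "\<dots> = 0" using Y0(2) measure_mu_UNIV by (simp add: mu.emeasure_eq_measure)
  finally show ?thesis using Y0 by (intro AE_I[of _ _ "UNIV - Y0"]) auto
qed

lemma emeasure_PX_dens: "A \<in> sets borel \<Longrightarrow> emeasure PX A = (\<integral>\<^sup>+x. ennreal (p x) * indicator A x \<partial>\<mu>)"
  using emeasure_density[of "\<lambda>x. ennreal (p x)" \<mu> A] dens by simp

lemma p_integrable: "integrable \<mu> p"
proof -
  have "(\<integral>\<^sup>+x. ennreal (p x) \<partial>\<mu>) = emeasure PX UNIV"
    using emeasure_PX_dens[of UNIV] by simp
  also have "\<dots> = 1" using prob_space.emeasure_space_1[OF PX(1)] by simp
  finally show ?thesis using p_nn by (intro integrableI_nonneg) auto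
qed

lemma measure_PX_dens: "A \<in> sets borel \<Longrightarrow> measure PX A = (\<integral>x. p x * indicator A x \<partial>\<mu>)"
proof -
  assume A: "A \<in> sets borel"
  have int: "integrable \<mu> (\<lambda>x. p x * indicator A x)"
    using A p_integrable by (intro integrable_real_mult_indicator) auto
  have "ennreal (measure PX A) = emeasure PX A" using PX(1) by (simp add: ps_emeasure)
  also have "\<dots> = (\<integral>\<^sup>+x. ennreal (p x * indicator A x) \<partial>\<mu>)"
    using emeasure_PX_dens[OF A] by (auto intro!: nn_integral_cong split: split_indicator)
  also have "\<dots> = ennreal (\<integral>x. p x * indicator A x \<partial>\<mu>)"
    using int p_nn by (intro nn_integral_eq_integral) auto
  finally show ?thesis using p_nn by (subst (asm) ennreal_inj) (auto intro!: integral_nonneg_AE)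
qed

lemma integral_PX:
  fixes f :: "'a \<Rightarrow> real"
  assumes f: "f \<in> borel_measurable borel" "\<And>x. 0 \<le> f x" "\<And>x. f x \<le> 1"
  shows "(\<integral>x. f x \<partial>PX) = (\<integral>x. p x * f x \<partial>\<mu>)"
proof -
  have "(\<integral>x. f x \<partial>PX) = (\<integral>x. f x \<partial>density \<mu> (\<lambda>x. ennreal (p x)))" using dens by simp
  also have "\<dots> = (\<integral>x. p x *\<^sub>R f x \<partial>\<mu>)"
    using f p_nn p_meas by (intro integral_density) (auto cong: measurable_cong_sets)
  finally show ?thesis by simp
qed

lemma integral_sum:
  fixes f :: "'a \<Rightarrow> real"
  assumes f: "f \<in> borel_measurable borel" "\<And>x. 0 \<le> f x" "\<And>x. f x \<le> 1"
  shows "(\<integral>x. f x \<partial>\<mu>) = (\<integral>x. f x \<partial>PX) + (\<integral>x. f x \<partial>PY)"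
proof -
  have fm: "f \<in> borel_measurable \<mu>" "f \<in> borel_measurable PX" "f \<in> borel_measurable PY"
    using f PX PY by (auto cong: measurable_cong_sets)
  have fX: "finite_measure PX" "finite_measure PY" using PX(1) PY(1) by (simp_all add: prob_space_def)
  have intX: "integrable PX f"
    by (rule finite_measure.integrable_const_bound[OF fX(1), where B=1]) (use f fm in auto)
  have intY: "integrable PY f"
    by (rule finite_measure.integrable_const_bound[OF fX(2), where B=1]) (use f fm in auto)
  have intM: "integrable \<mu> f" using f fm
    by (intro mu.integrable_const_bound[where B=1]) auto
  have "ennreal (\<integral>x. f x \<partial>\<mu>) = (\<integral>\<^sup>+x. ennreal (f x) \<partial>\<mu>)"
    using intM f by (intro nn_integral_eq_integral[symmetric]) auto
  also have "\<dots> = (\<integral>\<^sup>+x. ennreal (f x) \<partial>PX) + (\<integral>\<^sup>+x. ennreal (f x) \<partial>PY)"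
    using f by (intro nn_integral_sum_meas PX(2) PY(2)) auto
  also have "\<dots> = ennreal (\<integral>x. f x \<partial>PX) + ennreal (\<integral>x. f x \<partial>PY)"
    using intX intY f by (simp add: nn_integral_eq_integral)
  also have "\<dots> = ennreal ((\<integral>x. f x \<partial>PX) + (\<integral>x. f x \<partial>PY))"
    using f by (intro ennreal_plus[symmetric] integral_nonneg_AE) auto
  finally show ?thesis using f
    by (subst (asm) ennreal_inj) (auto intro!: integral_nonneg_AE add_nonneg_nonneg)
qed

end

context dens_setup
begin

interpretation mu: finite_measure \<mu> by (rule mu_finite)

lemma int_ind: "A \<in> sets borel \<Longrightarrow> integrable \<mu> (\<lambda>x. indicator A x :: real)"
proof -
  assume A: "A \<in> sets borel"
  have m: "(indicator A :: _ \<Rightarrow> real) \<in> borel_measurable \<mu>" using A by (intro borel_measurable_indicator) simp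
  show ?thesis by (rule mu.integrable_const_bound[where B=1]) (use m in \<open>auto split: split_indicator\<close>)
qed

lemma int_p_ind: "A \<in> sets borel \<Longrightarrow> integrable \<mu> (\<lambda>x. p x * indicator A x)"
  using p_integrable by (intro integrable_real_mult_indicator) auto

lemma int_ind_lin_int: "A \<in> sets borel \<Longrightarrow> integrable \<mu> (\<lambda>x. indicator A x * (a * p x + b))"
proof -
  assume A: "A \<in> sets borel"
  have "(\<lambda>x. indicator A x * (a * p x + b)) = (\<lambda>x. a * (p x * indicator A x) + b * indicator A x)"
    by (auto simp: algebra_simps)
  thus ?thesis using int_ind[OF A] int_p_ind[OF A] by simp
qed

lemma int_ind_lin: "A \<in> sets borel \<Longrightarrow> (\<integral>x. indicator A x * (a * p x + b) \<partial>\<mu>) = a * measure PX A + b * measure \<mu> A"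
proof -
  assume A: "A \<in> sets borel"
  have "(\<lambda>x. indicator A x * (a * p x + b)) = (\<lambda>x. a * (p x * indicator A x) + b * indicator A x)"
    by (auto simp: algebra_simps)
  hence "(\<integral>x. indicator A x * (a * p x + b) \<partial>\<mu>) = (\<integral>x. a * (p x * indicator A x) + b * indicator A x \<partial>\<mu>)"
    by simp
  also have "\<dots> = a * (\<integral>x. p x * indicator A x \<partial>\<mu>) + b * (\<integral>x. indicator A x \<partial>\<mu>)"
    using int_ind[OF A] int_p_ind[OF A] by simp
  also have "\<dots> = a * measure PX A + b * measure \<mu> A"
    using measure_PX_dens[OF A] by simp
  finally show ?thesis .
qed

lemma int_p: "(\<integral>x. p x \<partial>\<mu>) = 1"
  using measure_PX_dens[of UNIV] measure_UNIV_prob[OF PX] by simp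

lemma TV_le: "TV PX PY \<le> (\<integral>x. max 0 (1 - 2 * p x) \<partial>\<mu>)"
proof -
  define D where "D = (\<integral>x. max 0 (1 - 2 * p x) \<partial>\<mu>)"
  have i1: "integrable \<mu> (\<lambda>x. 1 - 2 * p x)" using p_integrable by simp
  have i2: "integrable \<mu> (\<lambda>x. 2 * p x - 1)" using p_integrable by simp
  have im1: "integrable \<mu> (\<lambda>x. max 0 (1 - 2 * p x))" using i1 by auto
  have im2: "integrable \<mu> (\<lambda>x. max 0 (2 * p x - 1))" using i2 by auto
  have "(\<integral>x. max 0 (2 * p x - 1) \<partial>\<mu>) = (\<integral>x. max 0 (1 - 2 * p x) + (2 * p x - 1) \<partial>\<mu>)"
    by (intro Bochner_Integration.integral_cong) auto
  also have "\<dots> = D + (\<integral>x. 2 * p x - 1 \<partial>\<mu>)" unfolding D_def using im1 i2 by simp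
  also have "(\<integral>x. 2 * p x - 1 \<partial>\<mu>) = 0"
    using p_integrable int_p measure_mu_UNIV by (simp add: mu.emeasure_eq_measure)
  finally have D2: "(\<integral>x. max 0 (2 * p x - 1) \<partial>\<mu>) = D" by simp
  have bound: "\<bar>measure PX A - measure PY A\<bar> \<le> D" if A: "A \<in> sets borel" for A
  proof -
    have e1: "measure PX A - measure PY A = (\<integral>x. indicator A x * (2 * p x + (-1)) \<partial>\<mu>)"
      using int_ind_lin[OF A, of 2 "-1"] measure_mu[OF A] by simp
    have e2: "measure PY A - measure PX A = (\<integral>x. indicator A x * ((-2) * p x + 1) \<partial>\<mu>)"
      using int_ind_lin[OF A, of "-2" 1] measure_mu[OF A] by simp
    have "(\<integral>x. indicator A x * (2 * p x + (-1)) \<partial>\<mu>) \<le> (\<integral>x. max 0 (2 * p x - 1) \<partial>\<mu>)"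
      by (rule integral_mono[OF int_ind_lin_int[OF A] im2]) (auto split: split_indicator)
    moreover have "(\<integral>x. indicator A x * ((-2) * p x + 1) \<partial>\<mu>) \<le> (\<integral>x. max 0 (1 - 2 * p x) \<partial>\<mu>)"
      by (rule integral_mono[OF int_ind_lin_int[OF A] im1]) (auto split: split_indicator)
    ultimately show ?thesis using e1 e2 D2 unfolding D_def by linarith
  qed
  show ?thesis unfolding TV_def D_def[symmetric]
    by (rule cSUP_least) (use bound in auto)
qed

lemma ball_diff:
  assumes Hold: "\<forall>y\<in>Y0. \<forall>z\<in>Y0. \<bar>p y - p z\<bar> \<le> C * dist y z powr \<beta>"
    and C: "C \<ge> 0" and beta: "\<beta> > 0" and h: "h > 0" and z: "z \<in> Y0"
  shows "2 * p z - 1 > 4 * C * h powr \<beta> \<Longrightarrow>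
           measure PX (ball z h) - measure PY (ball z h) \<ge> 2 * C * h powr \<beta> * measure \<mu> (ball z h)"
    and "2 * p z - 1 < - 4 * C * h powr \<beta> \<Longrightarrow>
           measure PY (ball z h) - measure PX (ball z h) \<ge> 2 * C * h powr \<beta> * measure \<mu> (ball z h)"
proof -
  define B where "B = ball z h"
  have B: "B \<in> sets borel" by (simp add: B_def)
  have close: "\<bar>p y - p z\<bar> \<le> C * h powr \<beta>" if "y \<in> B" "y \<in> Y0" for y
  proof -
    have "dist y z < h" using that by (simp add: B_def dist_commute)
    hence "dist y z powr \<beta> \<le> h powr \<beta>" using beta by (intro powr_mono2) auto
    hence "C * dist y z powr \<beta> \<le> C * h powr \<beta>" using C by (intro mult_left_mono) auto
    thus ?thesis using Hold that z by fastforce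
  qed
  have iB: "integrable \<mu> (\<lambda>x. indicator B x * (2 * p x + (-1)))"
    by (rule int_ind_lin_int[OF B])
  have iB': "integrable \<mu> (\<lambda>x. indicator B x * ((-2) * p x + 1))"
    by (rule int_ind_lin_int[OF B])
  have iC: "integrable \<mu> (\<lambda>x. indicator B x * (2 * C * h powr \<beta>))"
    using int_ind[OF B] by simp
  show "2 * p z - 1 > 4 * C * h powr \<beta> \<Longrightarrow>
           measure PX (ball z h) - measure PY (ball z h) \<ge> 2 * C * h powr \<beta> * measure \<mu> (ball z h)"
  proof -
    assume big: "2 * p z - 1 > 4 * C * h powr \<beta>"
    have "AE y in \<mu>. indicator B y * (2 * C * h powr \<beta>) \<le> indicator B y * (2 * p y + (-1))"
      using AE_Y0
    proof eventually_elim
      case (elim y)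
      show ?case
      proof (cases "y \<in> B")
        case True
        with close[OF True elim] big show ?thesis by (auto simp: abs_le_iff)
      qed simp
    qed
    hence "(\<integral>y. indicator B y * (2 * C * h powr \<beta>) \<partial>\<mu>) \<le> (\<integral>y. indicator B y * (2 * p y + (-1)) \<partial>\<mu>)"
      using iB iC by (intro integral_mono_AE) auto
    moreover have "(\<integral>y. indicator B y * (2 * C * h powr \<beta>) \<partial>\<mu>) = 2 * C * h powr \<beta> * measure \<mu> B"
      using int_ind_lin[OF B, of 0 "2 * C * h powr \<beta>"] by simp
    moreover have "(\<integral>y. indicator B y * (2 * p y + (-1)) \<partial>\<mu>) = measure PX B - measure PY B"
      using int_ind_lin[OF B, of 2 "-1"] measure_mu[OF B] by simp
    ultimately show ?thesis unfolding B_def by (simp add: mult_ac)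
  qed
  show "2 * p z - 1 < - 4 * C * h powr \<beta> \<Longrightarrow>
           measure PY (ball z h) - measure PX (ball z h) \<ge> 2 * C * h powr \<beta> * measure \<mu> (ball z h)"
  proof -
    assume big: "2 * p z - 1 < - 4 * C * h powr \<beta>"
    have "AE y in \<mu>. indicator B y * (2 * C * h powr \<beta>) \<le> indicator B y * ((-2) * p y + 1)"
      using AE_Y0
    proof eventually_elim
      case (elim y)
      show ?case
      proof (cases "y \<in> B")
        case True
        with close[OF True elim] big show ?thesis by (auto simp: abs_le_iff)
      qed simp
    qed
    hence "(\<integral>y. indicator B y * (2 * C * h powr \<beta>) \<partial>\<mu>) \<le> (\<integral>y. indicator B y * ((-2) * p y + 1) \<partial>\<mu>)"
      using iB' iC by (intro integral_mono_AE) auto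
    moreover have "(\<integral>y. indicator B y * (2 * C * h powr \<beta>) \<partial>\<mu>) = 2 * C * h powr \<beta> * measure \<mu> B"
      using int_ind_lin[OF B, of 0 "2 * C * h powr \<beta>"] by simp
    moreover have "(\<integral>y. indicator B y * ((-2) * p y + 1) \<partial>\<mu>) = measure PY B - measure PX B"
      using int_ind_lin[OF B, of "-2" 1] measure_mu[OF B] by simp
    ultimately show ?thesis unfolding B_def by (simp add: mult_ac)
  qed
qed

end

lemma g_bounds:
  fixes P Q K e :: real
  assumes P: "0 \<le> P" and Q: "0 \<le> Q" "Q \<le> 1"
  shows g_a: "(2*P-1)*Q + max 0 (1-2*P) \<le> 2*P+1"
    and g_b: "\<bar>2*P-1\<bar> \<le> K \<Longrightarrow> (2*P-1)*Q + max 0 (1-2*P) \<le> K"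
    and g_c: "2*P-1 > 0 \<Longrightarrow> Q \<le> e \<Longrightarrow> (2*P-1)*Q + max 0 (1-2*P) \<le> (2*P+1)*e"
    and g_d: "2*P-1 < 0 \<Longrightarrow> 1 - Q \<le> e \<Longrightarrow> (2*P-1)*Q + max 0 (1-2*P) \<le> (2*P+1)*e"
proof -
  show "(2*P-1)*Q + max 0 (1-2*P) \<le> 2*P+1"
  proof (cases "2*P-1 \<ge> 0")
    case True
    have "(2*P-1)*Q \<le> (2*P-1)*1" using True Q by (intro mult_left_mono) auto
    thus ?thesis using True by simp
  next
    case False
    have "(1-2*P)*(1-Q) \<le> (1-2*P)*1" using False Q by (intro mult_left_mono) auto
    thus ?thesis using False P by (simp add: algebra_simps)
  qed
  show "\<bar>2*P-1\<bar> \<le> K \<Longrightarrow> (2*P-1)*Q + max 0 (1-2*P) \<le> K"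
  proof (cases "2*P-1 \<ge> 0")
    case True
    have "(2*P-1)*Q \<le> (2*P-1)*1" using True Q by (intro mult_left_mono) auto
    thus "\<bar>2*P-1\<bar> \<le> K \<Longrightarrow> ?thesis" using True by simp
  next
    case False
    have "(1-2*P)*(1-Q) \<le> (1-2*P)*1" using False Q by (intro mult_left_mono) auto
    thus "\<bar>2*P-1\<bar> \<le> K \<Longrightarrow> ?thesis" using False P by (simp add: algebra_simps)
  qed
  show "2*P-1 > 0 \<Longrightarrow> Q \<le> e \<Longrightarrow> (2*P-1)*Q + max 0 (1-2*P) \<le> (2*P+1)*e"
  proof -
    assume a: "2*P-1 > 0" "Q \<le> e"
    have "(2*P-1)*Q \<le> (2*P-1)*e" using a by (intro mult_left_mono) auto
    also have "\<dots> \<le> (2*P+1)*e" using a Q by (intro mult_right_mono) auto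
    finally show ?thesis using a by simp
  qed
  show "2*P-1 < 0 \<Longrightarrow> 1 - Q \<le> e \<Longrightarrow> (2*P-1)*Q + max 0 (1-2*P) \<le> (2*P+1)*e"
  proof -
    assume a: "2*P-1 < 0" "1 - Q \<le> e"
    have "(1-2*P)*(1-Q) \<le> (1-2*P)*e" using a by (intro mult_left_mono) auto
    also have "\<dots> \<le> (2*P+1)*e" using a Q P by (intro mult_right_mono) auto
    finally show ?thesis using a by (simp add: algebra_simps)
  qed
qed

lemma pair_meas_int:
  fixes M :: "'b measure" and N :: "'c measure"
  assumes M: "prob_space M" and N: "prob_space N"
    and R: "{x\<in>space (M \<Otimes>\<^sub>M N). R (fst x) (snd x)} \<in> sets (M \<Otimes>\<^sub>M N)"
  shows "measure (M \<Otimes>\<^sub>M N) {(s,z)\<in>space (M \<Otimes>\<^sub>M N). R s z} = (\<integral>z. measure M {s\<in>space M. R s z} \<partial>N)"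
    and "(\<lambda>z. measure M {s\<in>space M. R s z}) \<in> borel_measurable N"
proof -
  interpret P: pair_sigma_finite M N
    unfolding pair_sigma_finite_def using prob_space_imp_sigma_finite[OF M] prob_space_imp_sigma_finite[OF N] by auto
  let ?E = "{x\<in>space (M \<Otimes>\<^sub>M N). R (fst x) (snd x)}"
  have E: "{(s,z)\<in>space (M \<Otimes>\<^sub>M N). R s z} = ?E" by auto
  have pre: "(\<lambda>x. (x,z)) -` ?E = {s\<in>space M. R s z}" if "z \<in> space N" for z
    using that by (auto simp: space_pair_measure)
  have "emeasure (M \<Otimes>\<^sub>M N) ?E = (\<integral>\<^sup>+z. emeasure M ((\<lambda>x. (x,z)) -` ?E) \<partial>N)"
    by (rule P.emeasure_pair_measure_alt2[OF R])
  also have "\<dots> = (\<integral>\<^sup>+z. ennreal (measure M {s\<in>space M. R s z}) \<partial>N)"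
    by (intro nn_integral_cong) (simp only: pre ps_emeasure[OF M])
  finally have eq: "emeasure (M \<Otimes>\<^sub>M N) ?E = (\<integral>\<^sup>+z. ennreal (measure M {s\<in>space M. R s z}) \<partial>N)" .
  have m1: "(\<lambda>z. emeasure M ((\<lambda>x. (x,z)) -` ?E)) \<in> borel_measurable N"
    by (rule P.measurable_emeasure_Pair2[OF R])
  hence "(\<lambda>z. enn2real (emeasure M ((\<lambda>x. (x,z)) -` ?E))) \<in> borel_measurable N" by measurable
  moreover have "\<And>z. z \<in> space N \<Longrightarrow> enn2real (emeasure M ((\<lambda>x. (x,z)) -` ?E)) = measure M {s\<in>space M. R s z}"
    by (simp only: pre measure_def)
  ultimately show meas: "(\<lambda>z. measure M {s\<in>space M. R s z}) \<in> borel_measurable N"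
    by (simp cong: measurable_cong)
  have "(\<integral>z. measure M {s\<in>space M. R s z} \<partial>N) = enn2real (\<integral>\<^sup>+z. ennreal (measure M {s\<in>space M. R s z}) \<partial>N)"
    by (rule integral_eq_nn_integral) (use meas in auto)
  then show "measure (M \<Otimes>\<^sub>M N) {(s,z)\<in>space (M \<Otimes>\<^sub>M N). R s z} = (\<integral>z. measure M {s\<in>space M. R s z} \<partial>N)"
    using eq E by (simp add: measure_def)
qed

context dens_setup
begin

interpretation mu: finite_measure \<mu> by (rule mu_finite)

lemma excess_bound:
  assumes w: "0 < w" "w < 1" and n: "n > 0" and h: "bandwidth d \<gamma> n = h" "h > 0"
    and Hold: "\<forall>y\<in>Y0. \<forall>z\<in>Y0. \<bar>p y - p z\<bar> \<le> C * dist y z powr \<beta>"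
    and C: "C > 0" and beta: "\<beta> > 0" and tau: "\<tau> > 0"
    and Cs: "finite Cs" "Y0 \<subseteq> (\<Union>c\<in>Cs. ball c (h/2))"
  shows "excess_risk w d \<gamma> n PX PY \<le> 3 * real (card Cs) * \<tau> + 8 * C * h powr \<beta> + 4 * epsn w n (C * h powr \<beta> * \<tau>)"
proof -
  define S where "S = PiM {..<n} (\<lambda>_. sample_law w PX PY)"
  have Lp: "prob_space (sample_law w PX PY)" using sample_law_prob[OF PX PY w] .
  have Ls: "sets (sample_law w PX PY) = sets (borel \<Otimes>\<^sub>M count_space UNIV)" using sample_law_sets[OF PX PY w] .
  have Sp: "prob_space S" unfolding S_def using Lp by (intro prob_space_PiM) auto
  interpret S: prob_space S by (rule Sp)
  define q where "q z = measure S {s\<in>space S. phi n h s z}" for z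
  define e where "e = epsn w n (C * h powr \<beta> * \<tau>)"
  have e0: "e \<ge> 0" unfolding e_def epsn_def[OF PX PY w] by simp
  have em: "est b n (ball z h) \<in> borel_measurable S" for b z
    unfolding S_def by (rule est_measurable[OF Ls]) simp
  have secm: "{s\<in>space S. phi n h s z} \<in> sets S" for z
  proof -
    have "{s\<in>space S. phi n h s z} = space S - {s\<in>space S. est True n (ball z h) s \<le> est False n (ball z h) s}"
      unfolding phi_def pX_hat_est[OF h(2)] pY_hat_est[OF h(2)] by auto
    thus ?thesis using borel_measurable_le[OF em em] by auto
  qed
  have q01: "0 \<le> q z" "q z \<le> 1" for z unfolding q_def by auto
  have qc: "measure S {s\<in>space S. \<not> phi n h s z} = 1 - q z" for z
  proof -
    have "{s\<in>space S. \<not> phi n h s z} = space S - {s\<in>space S. phi n h s z}" by auto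
    thus ?thesis unfolding q_def using S.prob_compl[OF secm] by simp
  qed
  have RX: "{x\<in>space (S \<Otimes>\<^sub>M PX). phi n h (fst x) (snd x)} \<in> sets (S \<Otimes>\<^sub>M PX)"
    unfolding S_def by (rule phi_measurable[OF Ls PX(2)])
  have RY0: "{x\<in>space (S \<Otimes>\<^sub>M PY). phi n h (fst x) (snd x)} \<in> sets (S \<Otimes>\<^sub>M PY)"
    unfolding S_def by (rule phi_measurable[OF Ls PY(2)])
  have RY: "{x\<in>space (S \<Otimes>\<^sub>M PY). \<not> phi n h (fst x) (snd x)} \<in> sets (S \<Otimes>\<^sub>M PY)"
  proof -
    have "{x\<in>space (S \<Otimes>\<^sub>M PY). \<not> phi n h (fst x) (snd x)} = space (S \<Otimes>\<^sub>M PY) - {x\<in>space (S \<Otimes>\<^sub>M PY). phi n h (fst x) (snd x)}"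
      by auto
    thus ?thesis using RY0 by auto
  qed
  have J1: "measure (S \<Otimes>\<^sub>M PX) {(s,z)\<in>space (S \<Otimes>\<^sub>M PX). phi n h s z} = (\<integral>z. q z \<partial>PX)"
    using pair_meas_int(1)[OF Sp PX(1) RX] unfolding q_def .
  have qmX: "q \<in> borel_measurable PX"
    using pair_meas_int(2)[OF Sp PX(1) RX] unfolding q_def[abs_def] .
  have qm: "q \<in> borel_measurable borel" using qmX PX(2) by (simp cong: measurable_cong_sets)
  have J2: "measure (S \<Otimes>\<^sub>M PY) {(s,z)\<in>space (S \<Otimes>\<^sub>M PY). \<not> phi n h s z} = (\<integral>z. 1 - q z \<partial>PY)"
    using pair_meas_int(1)[OF Sp PY(1) RY] qc by simp
  have qmY: "q \<in> borel_measurable PY" using qm PY(2) by (simp cong: measurable_cong_sets)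
  have fY: "finite_measure PY" using PY(1) by (simp add: prob_space_def)
  have intqY: "integrable PY q"
    by (rule finite_measure.integrable_const_bound[OF fY, where B=1]) (use q01 qmY in auto)
  have J2': "(\<integral>z. 1 - q z \<partial>PY) = 1 - (\<integral>z. q z \<partial>PY)"
  proof -
    have i1: "integrable PY (\<lambda>_. 1::real)" using fY by (simp add: finite_measure.integrable_const)
    show ?thesis using Bochner_Integration.integral_diff[OF i1 intqY] prob_space.prob_space[OF PY(1)] by simp
  qed
  have iPX: "(\<integral>z. q z \<partial>PX) = (\<integral>z. p z * q z \<partial>\<mu>)" by (rule integral_PX[OF qm q01])
  have iS: "(\<integral>z. q z \<partial>\<mu>) = (\<integral>z. q z \<partial>PX) + (\<integral>z. q z \<partial>PY)" by (rule integral_sum[OF qm q01])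
  have ex: "excess_risk w d \<gamma> n PX PY = (\<integral>z. q z \<partial>PX) + (1 - (\<integral>z. q z \<partial>PY)) - 1 + TV PX PY"
    unfolding excess_risk_def joint_law_def Let_def h(1) S_def[symmetric] J1 J2 J2' ..
  have qmu: "q \<in> borel_measurable \<mu>" using qm by (simp cong: measurable_cong_sets)
  have intq: "integrable \<mu> q"
    by (rule mu.integrable_const_bound[where B=1]) (use q01 qmu in auto)
  have intpq: "integrable \<mu> (\<lambda>z. p z * q z)"
    by (rule Bochner_Integration.integrable_bound[OF p_integrable]) (use q01 p_nn qmu in \<open>auto intro!: mult_left_le simp: abs_mult\<close>)
  have intmax: "integrable \<mu> (\<lambda>z. max 0 (1 - 2 * p z))" using p_integrable by auto
  define g where "g z = (2 * p z - 1) * q z + max 0 (1 - 2 * p z)" for z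
  have intg: "integrable \<mu> g"
  proof -
    have "g = (\<lambda>z. 2 * (p z * q z) - q z + max 0 (1 - 2 * p z))" unfolding g_def[abs_def] by (auto simp: algebra_simps)
    thus ?thesis using intpq intq intmax by simp
  qed
  have intg_eq: "(\<integral>z. g z \<partial>\<mu>) = 2 * (\<integral>z. p z * q z \<partial>\<mu>) - (\<integral>z. q z \<partial>\<mu>) + (\<integral>z. max 0 (1 - 2 * p z) \<partial>\<mu>)"
  proof -
    have "g = (\<lambda>z. 2 * (p z * q z) - q z + max 0 (1 - 2 * p z))" unfolding g_def[abs_def] by (auto simp: algebra_simps)
    thus ?thesis using intpq intq intmax by simp
  qed
  have step1: "excess_risk w d \<gamma> n PX PY \<le> (\<integral>z. g z \<partial>\<mu>)"
    using ex TV_le intg_eq iPX iS by linarith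
  define Cs' where "Cs' = {c\<in>Cs. measure \<mu> (ball c (h/2)) < \<tau>}"
  define U where "U = (\<Union>c\<in>Cs'. ball c (h/2))"
  have "open U" unfolding U_def by auto
  hence U: "U \<in> sets borel" by simp
  have fCs': "finite Cs'" "Cs' \<subseteq> Cs" using Cs(1) by (auto simp: Cs'_def)
  have muU: "measure \<mu> U \<le> real (card Cs) * \<tau>"
  proof -
    have "measure \<mu> U \<le> (\<Sum>c\<in>Cs'. measure \<mu> (ball c (h/2)))"
      unfolding U_def by (rule measure_UNION_le) (use fCs' in auto)
    also have "\<dots> \<le> (\<Sum>c\<in>Cs'. \<tau>)" by (intro sum_mono) (auto simp: Cs'_def)
    also have "\<dots> = real (card Cs') * \<tau>" by simp
    also have "\<dots> \<le> real (card Cs) * \<tau>" using tau card_mono[OF Cs(1) fCs'(2)] by (intro mult_right_mono) auto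
    finally show ?thesis .
  qed
  define K where "K = 4 * C * h powr \<beta>"
  have K0: "K \<ge> 0" using C by (simp add: K_def)
  define G where "G z = indicator U z * (2 * p z + 1) + (K + e) + (2 * e) * p z" for z
  have intG: "integrable \<mu> G"
    unfolding G_def[abs_def] using int_ind_lin_int[OF U, of 2 1] p_integrable by simp
  have intG_eq: "(\<integral>z. G z \<partial>\<mu>) = 2 * measure PX U + measure \<mu> U + (K + e) * 2 + 2 * e"
  proof -
    have "(\<integral>z. G z \<partial>\<mu>) = (\<integral>z. indicator U z * (2 * p z + 1) \<partial>\<mu>) + (K + e) * measure \<mu> UNIV + 2 * e * (\<integral>z. p z \<partial>\<mu>)"
      unfolding G_def[abs_def] using int_ind_lin_int[OF U, of 2 1] p_integrable by simp
    thus ?thesis using int_ind_lin[OF U, of 2 1] int_p measure_mu_UNIV by simp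
  qed
  have PXU: "measure PX U \<le> measure \<mu> U" using measure_mu[OF U] by simp
  have pw: "g z \<le> G z" if z: "z \<in> Y0" for z
  proof -
    have P: "0 \<le> p z" by (rule p_nn)
    have Gge: "G z \<ge> indicator U z * (2 * p z + 1) + K + (2 * p z + 1) * e"
      unfolding G_def by (simp add: algebra_simps)
    have ind0: "indicator U z * (2 * p z + 1) \<ge> 0" using P by simp
    have Pe: "(2 * p z + 1) * e \<ge> 0" using P e0 by simp
    consider (inU) "z \<in> U" | (small) "z \<notin> U" "\<bar>2 * p z - 1\<bar> \<le> K" | (big) "z \<notin> U" "\<bar>2 * p z - 1\<bar> > K"
      by linarith
    then show ?thesis
    proof cases
      case inU
      thus ?thesis using g_a[OF P q01[of z]] Gge K0 Pe unfolding g_def by (simp add: indicator_def)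
    next
      case small
      thus ?thesis using g_b[OF P q01[of z] small(2)] Gge ind0 Pe unfolding g_def by linarith
    next
      case big
      obtain c where c: "c \<in> Cs" "z \<in> ball c (h/2)" using Cs(2) z by auto
      have "c \<notin> Cs'" using c big(1) unfolding U_def by auto
      hence mc: "measure \<mu> (ball c (h/2)) \<ge> \<tau>" using c(1) unfolding Cs'_def by auto
      have sub: "ball c (h/2) \<subseteq> ball z h"
      proof
        fix y assume "y \<in> ball c (h/2)"
        hence "dist c y < h/2" by simp
        moreover have "dist z c < h/2" using c(2) by (simp add: dist_commute)
        ultimately have "dist z y < h" using dist_triangle[of z y c] by linarith
        thus "y \<in> ball z h" by simp
      qed
      have mz: "measure \<mu> (ball z h) \<ge> \<tau>"
        using mc mu.finite_measure_mono[OF sub] by simp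
      define Mg where "Mg = 2 * C * h powr \<beta> * \<tau>"
      have Mg: "Mg > 0" unfolding Mg_def using C tau h(2) by simp
      have Mg2: "Mg / 2 = C * h powr \<beta> * \<tau>" unfolding Mg_def by simp
      have Mgle: "Mg \<le> 2 * C * h powr \<beta> * measure \<mu> (ball z h)"
        unfolding Mg_def using mz C by (intro mult_left_mono) auto
      show ?thesis
      proof (cases "2 * p z - 1 > 0")
        case True
        hence "2 * p z - 1 > 4 * C * h powr \<beta>" using big(2) unfolding K_def by simp
        from ball_diff(1)[OF Hold _ beta h(2) z this] C
        have "measure PX (ball z h) - measure PY (ball z h) \<ge> Mg" using Mgle by simp
        from wrong_prob(1)[OF PX PY w n h(2) Mg this]
        have "q z \<le> e" unfolding q_def S_def e_def Mg2 .
        from g_c[OF P q01[of z] True this] show ?thesis using Gge ind0 K0 unfolding g_def by linarith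
      next
        case False
        hence F: "2 * p z - 1 < 0" using big(2) K0 by simp
        hence "2 * p z - 1 < - 4 * C * h powr \<beta>" using big(2) unfolding K_def by simp
        from ball_diff(2)[OF Hold _ beta h(2) z this] C
        have "measure PY (ball z h) - measure PX (ball z h) \<ge> Mg" using Mgle by simp
        from wrong_prob(2)[OF PX PY w n h(2) Mg this]
        have "1 - q z \<le> e" using qc[of z] unfolding S_def e_def Mg2 by simp
        from g_d[OF P q01[of z] F this] show ?thesis using Gge ind0 K0 unfolding g_def by linarith
      qed
    qed
  qed
  have "AE z in \<mu>. g z \<le> G z"
    using AE_Y0 by (rule AE_mp) (auto intro!: AE_I2 pw)
  hence "(\<integral>z. g z \<partial>\<mu>) \<le> (\<integral>z. G z \<partial>\<mu>)" using intg intG by (intro integral_mono_AE)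
  also have "\<dots> \<le> 3 * real (card Cs) * \<tau> + 8 * C * h powr \<beta> + 4 * e"
    using intG_eq PXU muU unfolding K_def by simp
  finally show ?thesis using step1 unfolding e_def by simp
qed

end

lemma asymA: fixes a k :: real assumes "a > 0" "k > 0"
  shows "eventually (\<lambda>n. 3 * real n powr (-a) \<le> ln (real n) powr (-k)) sequentially"
  using assms by real_asymp
lemma asymB: fixes b k c d :: real assumes "b > 0" "k > 0" "c > 0" "d > 0"
  shows "eventually (\<lambda>n. 16 * exp (- c * (d * ln (real n)) powr (-2*k) * real n powr b) \<le> ln (real n) powr (-k)) sequentially"
  using assms by real_asymp
lemma asymC: fixes k c :: real assumes "k > 0" "c > 0"
  shows "eventually (\<lambda>n. 8 * exp (- real n * c) \<le> ln (real n) powr (-k)) sequentially"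
  using assms by real_asymp

lemma cover_exists:
  fixes Y :: "'a::metric_space set"
  assumes entropy: "\<And>s. 0 < s \<Longrightarrow> s < s0 \<Longrightarrow>
        cx0 * s powr (-\<gamma>) \<le> ln (real (covering_number s Y))"
    and c0: "cx0 > 0" and gamma: "\<gamma> > 0" and s: "0 < s" "s < s0"
  shows "\<exists>Cs. finite Cs \<and> Y \<subseteq> (\<Union>c\<in>Cs. ball c s) \<and> card Cs = covering_number s Y"
proof -
  define KK where "KK = (\<lambda>s. {card C | C. finite C \<and> Y \<subseteq> (\<Union>c\<in>C. ball c s)})"
  have cn: "covering_number s' Y = Inf (KK s')" for s' unfolding covering_number_def KK_def ..
  show ?thesis
  proof (cases "KK s = {}")
    case False
    hence "Inf (KK s) \<in> KK s" by (rule Inf_nat_def1)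
    thus ?thesis unfolding cn KK_def by auto
  next
    case True
    have empty: "KK s' = {}" if "0 < s'" "s' \<le> s" for s'
    proof (rule ccontr)
      assume "KK s' \<noteq> {}"
      then obtain C where C: "finite C" "Y \<subseteq> (\<Union>c\<in>C. ball c s')" unfolding KK_def by auto
      have "(\<Union>c\<in>C. ball c s') \<subseteq> (\<Union>c\<in>C. ball c s)" using that by auto
      with C have "card C \<in> KK s" unfolding KK_def by blast
      with True show False by simp
    qed
    define V where "V = ln (real (Inf ({}::nat set)))"
    have cnV: "ln (real (covering_number s' Y)) = V" if "0 < s'" "s' \<le> s" for s'
      unfolding cn empty[OF that] V_def ..
    have "cx0 * s powr (-\<gamma>) \<le> V" using entropy[OF s] cnV[OF s(1)] by simp
    moreover have "cx0 * s powr (-\<gamma>) > 0" using c0 s by simp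
    ultimately have V: "V > 0" by linarith
    define s' where "s' = min s ((cx0 / (2 * V)) powr (1/\<gamma>))"
    have s'0: "s' > 0" unfolding s'_def using s c0 V by simp
    have s's: "s' \<le> s" unfolding s'_def by simp
    have "s' powr (-\<gamma>) \<ge> ((cx0 / (2 * V)) powr (1/\<gamma>)) powr (-\<gamma>)"
      by (rule powr_mono2') (use gamma s'0 in \<open>auto simp: s'_def\<close>)
    also have "((cx0 / (2 * V)) powr (1/\<gamma>)) powr (-\<gamma>) = (cx0 / (2 * V)) powr (-1)"
      using gamma by (simp add: powr_powr)
    also have "\<dots> = 2 * V / cx0" using c0 V by (simp add: powr_minus_divide)
    finally have "cx0 * s' powr (-\<gamma>) \<ge> cx0 * (2 * V / cx0)" using c0 by (intro mult_left_mono) auto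
    hence "cx0 * s' powr (-\<gamma>) \<ge> 2 * V" using c0 by simp
    moreover have "cx0 * s' powr (-\<gamma>) \<le> V" using entropy[of s'] s'0 s's s cnV[OF s'0 s's] by simp
    ultimately show ?thesis using V by linarith
  qed
qed

lemma card_bound:
  assumes "ln (real N) > 0" "ln (real N) \<le> B"
  shows "real N \<le> exp B"
proof -
  have "real N > 0" using assms(1) by (cases N) auto
  hence "real N = exp (ln (real N))" by simp
  also have "\<dots> \<le> exp B" using assms(2) by simp
  finally show ?thesis .
qed

lemma hp1:
  fixes H g :: real assumes "H > 0"
  shows "(H / 2) powr (-g) = H powr (-g) * 2 powr g"
proof -
  have "(H / 2) powr (-g) = H powr (-g) / 2 powr (-g)" using assms by (intro powr_divide; simp)
  also have "\<dots> = H powr (-g) * 2 powr g" by (simp add: powr_minus divide_inverse)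
  finally show ?thesis .
qed
lemma hp2:
  fixes x g :: real assumes "x > 0" "g > 0"
  shows "(x powr (-1/g)) powr (-g) = x"
  using assms by (simp add: powr_powr)
lemma hp3:
  fixes x g b :: real assumes "x > 0" "g > 0"
  shows "(x powr (-1/g)) powr b = x powr (-b/g)"
  using assms by (simp add: powr_powr)

lemma h_powr:
  fixes d \<gamma> :: real and n :: nat
  assumes "d * ln (real n) > 0" "\<gamma> > 0"
  shows "(bandwidth d \<gamma> n / 2) powr (-\<gamma>) = 2 powr \<gamma> * d * ln (real n)"
    and "bandwidth d \<gamma> n powr \<beta> = (d * ln (real n)) powr (-\<beta>/\<gamma>)"
    and "bandwidth d \<gamma> n > 0"
proof -
  have "d * ln (real n) \<noteq> 0" using assms by linarith
  hence hp: "bandwidth d \<gamma> n > 0" unfolding bandwidth_def by simp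
  thus "bandwidth d \<gamma> n > 0" .
  have "(bandwidth d \<gamma> n / 2) powr (-\<gamma>) = bandwidth d \<gamma> n powr (-\<gamma>) * 2 powr \<gamma>"
    by (rule hp1[OF hp])
  also have "bandwidth d \<gamma> n powr (-\<gamma>) = d * ln (real n)"
    unfolding bandwidth_def using assms by (rule hp2)
  finally show "(bandwidth d \<gamma> n / 2) powr (-\<gamma>) = 2 powr \<gamma> * d * ln (real n)" by simp
  show "bandwidth d \<gamma> n powr \<beta> = (d * ln (real n)) powr (-\<beta>/\<gamma>)"
    unfolding bandwidth_def using assms by (rule hp3)
qed

lemma eps_rewrite:
  fixes n :: nat and C v D lam :: real
  assumes n: "n > 0" and D: "D > 0"
  shows "real n * (C * D powr (-k) * real n powr (-lam))\<^sup>2 * v\<^sup>2 / 8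
         = (C\<^sup>2 * v\<^sup>2 / 8) * D powr (-2*k) * real n powr (1 - 2 * lam)"
proof -
  have nn: "real n > 0" using n by simp
  have a: "(D powr (-k))\<^sup>2 = D powr (-2*k)"
    using D by (simp add: power2_eq_square powr_add[symmetric])
  have b: "real n * (real n powr (-lam))\<^sup>2 = real n powr (1 - 2 * lam)"
  proof -
    have "real n powr (1 - 2 * lam) = real n powr (1 + (-lam) + (-lam))"
      by (rule arg_cong[where f="\<lambda>x. real n powr x"]) simp
    also have "\<dots> = real n powr 1 * real n powr (-lam) * real n powr (-lam)" by (simp only: powr_add)
    also have "\<dots> = real n * (real n powr (-lam))\<^sup>2" using nn by (simp add: power2_eq_square)
    finally show ?thesis by (rule sym)
  qed
  have "real n * (C * D powr (-k) * real n powr (-lam))\<^sup>2 * v\<^sup>2 / 8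
        = (C\<^sup>2 * v\<^sup>2 / 8) * (D powr (-k))\<^sup>2 * (real n * (real n powr (-lam))\<^sup>2)"
    by (simp add: power_mult_distrib)
  also have "\<dots> = (C\<^sup>2 * v\<^sup>2 / 8) * D powr (-2*k) * real n powr (1 - 2 * lam)" unfolding a b ..
  finally show ?thesis .
qed


lemma per_pair:
  fixes Y :: "'a::polish_space set" and PX PY :: "'a measure"
  assumes entropy: "\<And>s. 0 < s \<Longrightarrow> s < s0 \<Longrightarrow>
        cx0 * s powr (-\<gamma>) \<le> ln (real (covering_number s Y)) \<and>
        ln (real (covering_number s Y)) \<le> cx1 * s powr (-\<gamma>)"
    and c0: "cx0 > 0" and gamma: "\<gamma> > 0" and C: "C > 0" and beta: "\<beta> > 0"
    and w: "0 < w" "w < 1" and d: "d > 0"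
    and n: "real n > 1" and hs0: "bandwidth d \<gamma> n / 2 < s0"
    and pair: "(PX, PY) \<in> model_class Y C \<beta> \<kappa>"
  shows "excess_risk w d \<gamma> n PX PY \<le> 3 * real n powr (-(lam - cx1 * 2 powr \<gamma> * d))
           + 8 * C * d powr (-(\<beta>/\<gamma>)) * ln (real n) powr (-(\<beta>/\<gamma>))
           + 16 * exp (- ((C\<^sup>2 * (min w (1-w))\<^sup>2 / 8) * (d * ln (real n)) powr (-2*(\<beta>/\<gamma>)) * real n powr (1 - 2 * lam)))
           + 8 * exp (- real n * ((min w (1-w))\<^sup>2 / 2))"
proof -
  from pair obtain Y0 p where PX: "prob_space PX" "sets PX = sets borel"
    and PY: "prob_space PY" "sets PY = sets borel"
    and Y0s: "Y0 \<in> sets borel" "Y0 \<subseteq> Y" "emeasure (sum_meas PX PY) Y0 = 2"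
    and pm: "p \<in> borel_measurable borel" "\<And>x. 0 \<le> p x"
    and dens: "density (sum_meas PX PY) (\<lambda>x. ennreal (p x)) = PX"
    and Hold: "\<forall>y\<in>Y0. \<forall>z\<in>Y0. \<bar>p y - p z\<bar> \<le> C * dist y z powr \<beta>"
    using pair unfolding model_class_def by blast
  interpret dens_setup PX PY p Y0
    unfolding dens_setup_def using PX PY Y0s(1) Y0s(3) pm dens by simp
  have n0: "n > 0" using n by simp
  have lnpos: "d * ln (real n) > 0" using n d by simp
  define h where "h = bandwidth d \<gamma> n"
  have hpos: "h > 0" unfolding h_def using h_powr(3)[OF lnpos gamma] .
  have hs: "0 < h/2" "h/2 < s0" using hpos hs0 by (auto simp: h_def)
  obtain Cs where Cs: "finite Cs" "Y \<subseteq> (\<Union>c\<in>Cs. ball c (h/2))" "card Cs = covering_number (h/2) Y"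
    using cover_exists[of s0 cx0 \<gamma> Y "h/2"] entropy c0 gamma hs by blast
  have lb: "cx0 * (h/2) powr (-\<gamma>) \<le> ln (real (covering_number (h/2) Y))"
    and ub: "ln (real (covering_number (h/2) Y)) \<le> cx1 * (h/2) powr (-\<gamma>)" using entropy[OF hs] by auto
  have "cx0 * (h/2) powr (-\<gamma>) > 0" using c0 hs by simp
  hence lnN: "ln (real (covering_number (h/2) Y)) > 0" using lb by linarith
  have "real (card Cs) \<le> exp (cx1 * (h/2) powr (-\<gamma>))"
    unfolding Cs(3) by (rule card_bound[OF lnN ub])
  also have "(h/2) powr (-\<gamma>) = 2 powr \<gamma> * d * ln (real n)"
    unfolding h_def by (rule h_powr(1)[OF lnpos gamma])
  also have "exp (cx1 * (2 powr \<gamma> * d * ln (real n))) = real n powr (cx1 * 2 powr \<gamma> * d)"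
    using n by (simp add: powr_def mult_ac)
  finally have cardb: "real (card Cs) \<le> real n powr (cx1 * 2 powr \<gamma> * d)" .
  have tau: "real n powr (-lam) > 0" using n by simp
  have Cs0: "Y0 \<subseteq> (\<Union>c\<in>Cs. ball c (h/2))" using Y0s(2) Cs(2) by auto
  have eb: "excess_risk w d \<gamma> n PX PY \<le> 3 * real (card Cs) * real n powr (-lam) + 8 * C * h powr \<beta>
          + 4 * epsn w n (C * h powr \<beta> * real n powr (-lam))"
    by (rule excess_bound[OF w n0 h_def[symmetric] hpos Hold C beta tau Cs(1) Cs0])
  have X: "3 * real (card Cs) * real n powr (-lam) \<le> 3 * real n powr (cx1 * 2 powr \<gamma> * d) * real n powr (-lam)"
    using cardb tau by (intro mult_right_mono) auto
  have main: "excess_risk w d \<gamma> n PX PY \<le> 3 * real n powr (cx1 * 2 powr \<gamma> * d) * real n powr (-lam)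
          + 8 * C * h powr \<beta> + 4 * epsn w n (C * h powr \<beta> * real n powr (-lam))"
    using eb X by linarith
  have e1: "real n powr (cx1 * 2 powr \<gamma> * d) * real n powr (-lam) = real n powr (-(lam - cx1 * 2 powr \<gamma> * d))"
    using n by (simp add: powr_add[symmetric])
  have hb: "h powr \<beta> = (d * ln (real n)) powr (-(\<beta>/\<gamma>))"
    unfolding h_def h_powr(2)[OF lnpos gamma] by simp
  have e2: "h powr \<beta> = d powr (-(\<beta>/\<gamma>)) * ln (real n) powr (-(\<beta>/\<gamma>))"
    unfolding hb using d n by (intro powr_mult; simp)
  define v where "v = min w (1-w)"
  have er: "real n * (C * h powr \<beta> * real n powr (-lam))\<^sup>2 * v\<^sup>2 / 8
         = (C\<^sup>2 * v\<^sup>2 / 8) * (d * ln (real n)) powr (-2*(\<beta>/\<gamma>)) * real n powr (1 - 2 * lam)"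
    unfolding hb by (rule eps_rewrite[OF n0 lnpos])
  have e3: "4 * epsn w n (C * h powr \<beta> * real n powr (-lam))
      = 16 * exp (- ((C\<^sup>2 * v\<^sup>2 / 8) * (d * ln (real n)) powr (-2*(\<beta>/\<gamma>)) * real n powr (1 - 2 * lam)))
        + 8 * exp (- real n * (v\<^sup>2 / 2))"
  proof -
    have a1: "- real n * (C * h powr \<beta> * real n powr (-lam))\<^sup>2 * v\<^sup>2 / 8
       = - ((C\<^sup>2 * v\<^sup>2 / 8) * (d * ln (real n)) powr (-2*(\<beta>/\<gamma>)) * real n powr (1 - 2 * lam))"
      using er by linarith
    have a2: "- real n * v\<^sup>2 / 2 = - real n * (v\<^sup>2 / 2)" by simp
    show ?thesis unfolding epsn_def[OF PX PY w] v_def[symmetric] a1 a2 by simp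
  qed
  have f1: "3 * real n powr (cx1 * 2 powr \<gamma> * d) * real n powr (-lam) = 3 * real n powr (-(lam - cx1 * 2 powr \<gamma> * d))"
    using e1 by simp
  have f2: "8 * C * h powr \<beta> = 8 * C * d powr (-(\<beta>/\<gamma>)) * ln (real n) powr (-(\<beta>/\<gamma>))"
    unfolding e2 by simp
  show ?thesis using main f1 f2 e3 unfolding v_def by linarith
qed


theorem theorem3:
  fixes Y :: "'a::polish_space set"
    and s0 cx0 cx1 \<gamma> C \<beta> \<kappa> w \<eta> d :: real
  assumes Y_borel: "Y \<in> sets borel"
    and s0: "s0 > 0" and c0: "0 < cx0" and c01: "cx0 < cx1" and gamma: "\<gamma> > 0"
    and entropy: "\<And>s. 0 < s \<Longrightarrow> s < s0 \<Longrightarrow>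
        cx0 * s powr (-\<gamma>) \<le> ln (real (covering_number s Y)) \<and>
        ln (real (covering_number s Y)) \<le> cx1 * s powr (-\<gamma>)"
    and C: "C > 0" and beta: "0 < \<beta>" "\<beta> \<le> 1" and kappa: "\<kappa> > 0"
    and w: "0 < w" "w < 1"
    and eta: "0 < \<eta>" "\<eta> < 1/2"
    and d: "0 < d" "d < \<eta> * inverse cx1 * 4 powr (-\<gamma>)"
  shows "\<exists>c. \<forall>\<^sub>F n in sequentially.
           \<forall>(PX, PY) \<in> model_class Y C \<beta> \<kappa>.
             excess_risk w d \<gamma> n PX PY \<le> c * ln (real n) powr (-\<beta> / \<gamma>)"
proof -
  define \<alpha> where "\<alpha> = cx1 * 2 powr \<gamma> * d"
  have cx1: "cx1 > 0" using c0 c01 by linarith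
  have a0: "\<alpha> > 0" unfolding \<alpha>_def using cx1 d by simp
  have p4: "4 powr (-\<gamma>) = 2 powr (-\<gamma>) * 2 powr (-\<gamma>)"
    using powr_mult[of 2 2 "-\<gamma>"] by simp
  have p22: "2 powr \<gamma> * 2 powr (-\<gamma>) = (1::real)" by (simp add: powr_add[symmetric])
  have p2l: "2 powr (-\<gamma>) < (1::real)" using gamma by (intro powr_less_one) auto
  have "cx1 * d < cx1 * (\<eta> * inverse cx1 * 4 powr (-\<gamma>))" using d cx1 by simp
  also have "\<dots> = \<eta> * 4 powr (-\<gamma>)" using cx1 by (simp add: field_simps)
  finally have "2 powr \<gamma> * (cx1 * d) < 2 powr \<gamma> * (\<eta> * 4 powr (-\<gamma>))" by simp
  also have "2 powr \<gamma> * (\<eta> * 4 powr (-\<gamma>)) = \<eta> * 2 powr (-\<gamma>)"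
    unfolding p4 using p22 by (simp add: mult_ac)
  also have "\<dots> < \<eta>" using p2l eta by simp
  finally have a_half: "\<alpha> < 1/2" unfolding \<alpha>_def using eta by (simp add: mult_ac)
  define lam where "lam = (\<alpha> + 1/2) / 2"
  have la: "lam - \<alpha> > 0" "1 - 2 * lam > 0" using a_half by (auto simp: lam_def)
  define k where "k = \<beta> / \<gamma>"
  have k: "k > 0" using beta gamma by (simp add: k_def)
  define v where "v = min w (1-w)"
  have v: "v > 0" using w by (simp add: v_def)
  have cc: "C\<^sup>2 * v\<^sup>2 / 8 > 0" "v\<^sup>2 / 2 > 0" using C v by auto
  have ev1: "eventually (\<lambda>n. real n > 1) sequentially" by real_asymp
  have ev2: "eventually (\<lambda>n. (d * ln (real n)) powr (-1/\<gamma>) / 2 < s0) sequentially"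
    using d gamma s0 by real_asymp
  have ev: "eventually (\<lambda>n. real n > 1 \<and> bandwidth d \<gamma> n / 2 < s0
      \<and> 3 * real n powr (-(lam - \<alpha>)) \<le> ln (real n) powr (-k)
      \<and> 16 * exp (- (C\<^sup>2 * v\<^sup>2 / 8) * (d * ln (real n)) powr (-2*k) * real n powr (1 - 2 * lam)) \<le> ln (real n) powr (-k)
      \<and> 8 * exp (- real n * (v\<^sup>2 / 2)) \<le> ln (real n) powr (-k)) sequentially"
    using ev1 ev2[unfolded bandwidth_def[symmetric]] asymA[OF la(1) k] asymB[OF la(2) k cc(1) d(1)] asymC[OF k cc(2)]
    by (intro eventually_conj) (auto simp: bandwidth_def)
  show ?thesis
  proof (intro exI[of _ "3 + 8 * C * d powr (-k)"], rule eventually_mono[OF ev], safe)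
    fix n :: nat and PX PY
    assume n: "real n > 1" "bandwidth d \<gamma> n / 2 < s0"
      and A: "3 * real n powr (-(lam - \<alpha>)) \<le> ln (real n) powr (-k)"
      and B: "16 * exp (- (C\<^sup>2 * v\<^sup>2 / 8) * (d * ln (real n)) powr (-2*k) * real n powr (1 - 2 * lam)) \<le> ln (real n) powr (-k)"
      and Cc: "8 * exp (- real n * (v\<^sup>2 / 2)) \<le> ln (real n) powr (-k)"
      and pair: "(PX, PY) \<in> model_class Y C \<beta> \<kappa>"
    have pp: "excess_risk w d \<gamma> n PX PY \<le> 3 * real n powr (-(lam - \<alpha>))
           + 8 * C * d powr (-k) * ln (real n) powr (-k)
           + 16 * exp (- ((C\<^sup>2 * v\<^sup>2 / 8) * (d * ln (real n)) powr (-2*k) * real n powr (1 - 2 * lam)))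
           + 8 * exp (- real n * (v\<^sup>2 / 2))"
      using per_pair[OF entropy c0 gamma C beta(1) w d(1) n(1) n(2) pair, of lam]
      unfolding \<alpha>_def k_def v_def .
    have "- ((C\<^sup>2 * v\<^sup>2 / 8) * (d * ln (real n)) powr (-2*k) * real n powr (1 - 2 * lam))
        = - (C\<^sup>2 * v\<^sup>2 / 8) * (d * ln (real n)) powr (-2*k) * real n powr (1 - 2 * lam)" by simp
    hence "excess_risk w d \<gamma> n PX PY \<le> (3 + 8 * C * d powr (-k)) * ln (real n) powr (-k)"
      using pp A B Cc by (simp add: algebra_simps)
    moreover have "-\<beta> / \<gamma> = -k" unfolding k_def by simp
    ultimately show "excess_risk w d \<gamma> n PX PY \<le> (3 + 8 * C * d powr (-k)) * ln (real n) powr (-\<beta> / \<gamma>)"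
      by simp
  qed
qed

end
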